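(* Let $g\in G$, $k\in K$ and $t\ge0$. Then \[ 0\le A^+(g^{-1}k\exp(tH))-H(g^{-1}k\exp(tH))\le\frac{1+|g.0|}{1-|g.0|}e^{-2t}. \]
   Context: $G=Sp(n,1)$ acting on the unit ball $\mathbb B(\mathbb H^n)=\{x\in\mathbb H^n:|x|<1\}$ by $x\mapsto(ax+b)(cx+d)^{-1}$ for $g=\begin{pmatrix}a&b\\c&d\end{pmatrix}$; $0$ is the origin and $|g.0|<1$. $K=Sp(n)\times Sp(1)$, $H=\begin{pmatrix}0_n&e_1\\{}^te_1&0\end{pmatrix}$, $A=\{\exp tH\}$. $H(x)$ is the Iwasawa projection, $x=\kappa(x)e^{H(x)}n(x)$ with $G=KAN$, and $A^+(x)\ge0$ the Cartan projection, $x=k_1e^{A^+(x)}k_2$, identified with real numbers. *)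

theory Defs
  imports Complex_Main
begin

datatype quat = Quat (qre: real) (qi: real) (qj: real) (qk: real)

instantiation quat :: ab_group_add
begin
definition "0 = Quat 0 0 0 0"
definition "p + q = Quat (qre p + qre q) (qi p + qi q) (qj p + qj q) (qk p + qk q)"
definition "- p = Quat (- qre p) (- qi p) (- qj p) (- qk p)"
definition "p - q = Quat (qre p - qre q) (qi p - qi q) (qj p - qj q) (qk p - qk q)"
instance
  by standard (auto simp: zero_quat_def plus_quat_def uminus_quat_def minus_quat_def
                 intro: quat.expand)
end

instantiation quat :: "{times, one, inverse}"
begin
definition "1 = Quat 1 0 0 0"
definition "p * q = Quat
   (qre p * qre q - qi p * qi q - qj p * qj q - qk p * qk q)
   (qre p * qi q + qi p * qre q + qj p * qk q - qk p * qj q)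
   (qre p * qj q - qi p * qk q + qj p * qre q + qk p * qi q)
   (qre p * qk q + qi p * qj q - qj p * qi q + qk p * qre q)"
definition "inverse p = (let s = (qre p)^2 + (qi p)^2 + (qj p)^2 + (qk p)^2 in
   Quat (qre p / s) (- qi p / s) (- qj p / s) (- qk p / s))"
definition "divide p q = p * inverse (q::quat)"
instance ..
end

definition qcnj :: "quat \<Rightarrow> quat" where
  "qcnj p = Quat (qre p) (- qi p) (- qj p) (- qk p)"

definition qnorm :: "quat \<Rightarrow> real" where
  "qnorm p = sqrt ((qre p)^2 + (qi p)^2 + (qj p)^2 + (qk p)^2)"

definition qreal :: "real \<Rightarrow> quat" where
  "qreal r = Quat r 0 0 0"

type_synonym qmat = "nat \<Rightarrow> nat \<Rightarrow> quat"

text \<open>Square matrix of size n+1 (indices 0..n; entries outside are zero).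
  Index i < n corresponds to the coordinates of H^n, index n to the last one.\<close>
definition is_mat :: "nat \<Rightarrow> qmat \<Rightarrow> bool" where
  "is_mat n M \<longleftrightarrow> (\<forall>i j. (n < i \<or> n < j) \<longrightarrow> M i j = 0)"

definition mmul :: "nat \<Rightarrow> qmat \<Rightarrow> qmat \<Rightarrow> qmat" where
  "mmul n A B = (\<lambda>i j. if i \<le> n \<and> j \<le> n then (\<Sum>k\<le>n. A i k * B k j) else 0)"

definition mid :: "nat \<Rightarrow> qmat" where
  "mid n = (\<lambda>i j. if i = j \<and> i \<le> n then 1 else 0)"

definition madj :: "nat \<Rightarrow> qmat \<Rightarrow> qmat" where
  "madj n A = (\<lambda>i j. if i \<le> n \<and> j \<le> n then qcnj (A j i) else 0)"

definition mdiff :: "qmat \<Rightarrow> qmat \<Rightarrow> qmat" where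
  "mdiff A B = (\<lambda>i j. A i j - B i j)"

definition mnorm :: "nat \<Rightarrow> qmat \<Rightarrow> real" where
  "mnorm n A = sqrt (\<Sum>i\<le>n. \<Sum>j\<le>n. (qnorm (A i j))^2)"

definition minv :: "nat \<Rightarrow> qmat \<Rightarrow> qmat" where
  "minv n A = (THE B. is_mat n B \<and> mmul n B A = mid n \<and> mmul n A B = mid n)"

definition Jform :: "nat \<Rightarrow> qmat" where
  "Jform n = (\<lambda>i j. if i = j \<and> i < n then 1 else if i = n \<and> j = n then - 1 else 0)"

definition Sp :: "nat \<Rightarrow> qmat set" where
  "Sp n = {g. is_mat n g \<and> mmul n (mmul n (madj n g) (Jform n)) g = Jform n}"

text \<open>K = Sp(n) x Sp(1): block diagonal elements of Sp(n,1).\<close>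
definition Kgrp :: "nat \<Rightarrow> qmat set" where
  "Kgrp n = {g \<in> Sp n. \<forall>i<n. g i n = 0 \<and> g n i = 0}"

text \<open>exp(tH) for H with entries H_{1,n+1} = H_{n+1,1} = 1 (here indices 0 and n),
  written out explicitly.\<close>
definition expH :: "nat \<Rightarrow> real \<Rightarrow> qmat" where
  "expH n t = (\<lambda>i j.
      if (i = 0 \<and> j = 0) \<or> (i = n \<and> j = n) then qreal (cosh t)
      else if (i = 0 \<and> j = n) \<or> (i = n \<and> j = 0) then qreal (sinh t)
      else if i = j \<and> i < n then 1 else 0)"

text \<open>N: the nilpotent subgroup of the Iwasawa decomposition G = KAN, namely the
  horospherical (contraction) subgroup {m | exp(-tH) m exp(tH) -> 1 as t -> +infinity},
  i.e. exp of the sum of the root spaces with positive roots on H.\<close>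
definition Ngrp :: "nat \<Rightarrow> qmat set" where
  "Ngrp n = {m \<in> Sp n.
     ((\<lambda>t. mnorm n (mdiff (mmul n (mmul n (expH n (- t)) m) (expH n t)) (mid n))) \<longlongrightarrow> 0) at_top}"

definition iwasawa :: "nat \<Rightarrow> qmat \<Rightarrow> real" where
  "iwasawa n x = (THE s. \<exists>\<kappa>\<in>Kgrp n. \<exists>m\<in>Ngrp n. x = mmul n (mmul n \<kappa> (expH n s)) m)"

definition cartan :: "nat \<Rightarrow> qmat \<Rightarrow> real" where
  "cartan n x = (THE t. 0 \<le> t \<and> (\<exists>k1\<in>Kgrp n. \<exists>k2\<in>Kgrp n. x = mmul n (mmul n k1 (expH n t)) k2))"

text \<open>Vectors of H^n: functions nat => quat, coordinates 0..n-1.\<close>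
definition vnorm :: "nat \<Rightarrow> (nat \<Rightarrow> quat) \<Rightarrow> real" where
  "vnorm n x = sqrt (\<Sum>i<n. (qnorm (x i))^2)"

definition act :: "nat \<Rightarrow> qmat \<Rightarrow> (nat \<Rightarrow> quat) \<Rightarrow> (nat \<Rightarrow> quat)" where
  "act n g x = (\<lambda>i. if i < n then
      ((\<Sum>j<n. g i j * x j) + g i n) * inverse ((\<Sum>j<n. g n j * x j) + g n n)
    else 0)"

end

theory Submission
  imports Defs "Jordan_Normal_Form.Determinant" "HOL-Library.Function_Algebras"
begin


lemma quat_eq_iff: "p = q \<longleftrightarrow> qre p = qre q \<and> qi p = qi q \<and> qj p = qj q \<and> qk p = qk q"
  by (cases p; cases q) auto

lemma qsimps [simp]:
  "qre 0 = 0" "qi 0 = 0" "qj 0 = 0" "qk 0 = 0"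
  "qre 1 = 1" "qi 1 = 0" "qj 1 = 0" "qk 1 = 0"
  "qre (p + q) = qre p + qre q" "qi (p + q) = qi p + qi q" "qj (p + q) = qj p + qj q" "qk (p + q) = qk p + qk q"
  "qre (p - q) = qre p - qre q" "qi (p - q) = qi p - qi q" "qj (p - q) = qj p - qj q" "qk (p - q) = qk p - qk q"
  "qre (- p) = - qre p" "qi (- p) = - qi p" "qj (- p) = - qj p" "qk (- p) = - qk p"
  "qre (p * q) = qre p * qre q - qi p * qi q - qj p * qj q - qk p * qk q"
  "qi (p * q) = qre p * qi q + qi p * qre q + qj p * qk q - qk p * qj q"
  "qj (p * q) = qre p * qj q - qi p * qk q + qj p * qre q + qk p * qi q"
  "qk (p * q) = qre p * qk q + qi p * qj q - qj p * qi q + qk p * qre q"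
  "qre (qcnj p) = qre p" "qi (qcnj p) = - qi p" "qj (qcnj p) = - qj p" "qk (qcnj p) = - qk p"
  "qre (qreal r) = r" "qi (qreal r) = 0" "qj (qreal r) = 0" "qk (qreal r) = 0"
  by (simp_all add: zero_quat_def one_quat_def plus_quat_def minus_quat_def uminus_quat_def
      times_quat_def qcnj_def qreal_def)

instance quat :: ring_1
  by standard (simp_all add: quat_eq_iff algebra_simps)

lemma qsimps2 [simp]:
  "qre (inverse p) = qre p / (qre p ^ 2 + qi p ^ 2 + qj p ^ 2 + qk p ^ 2)"
  "qi (inverse p) = - qi p / (qre p ^ 2 + qi p ^ 2 + qj p ^ 2 + qk p ^ 2)"
  "qj (inverse p) = - qj p / (qre p ^ 2 + qi p ^ 2 + qj p ^ 2 + qk p ^ 2)"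
  "qk (inverse p) = - qk p / (qre p ^ 2 + qi p ^ 2 + qj p ^ 2 + qk p ^ 2)"
  by (simp_all add: inverse_quat_def Let_def)

lemma qnz: "p \<noteq> 0 \<Longrightarrow> qre p ^ 2 + qi p ^ 2 + qj p ^ 2 + qk p ^ 2 \<noteq> 0"
  by (simp add: quat_eq_iff) (smt (verit) power2_less_eq_zero_iff sum_power2_eq_zero_iff)

lemma inv_eq: "inverse p = qreal (1 / (qre p ^ 2 + qi p ^ 2 + qj p ^ 2 + qk p ^ 2)) * qcnj p"
  by (simp add: quat_eq_iff)

lemma cnj_mult_self: "qcnj p * p = qreal (qre p ^ 2 + qi p ^ 2 + qj p ^ 2 + qk p ^ 2)"
  by (simp add: quat_eq_iff power2_eq_square algebra_simps)

lemma mult_cnj_self: "p * qcnj p = qreal (qre p ^ 2 + qi p ^ 2 + qj p ^ 2 + qk p ^ 2)"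
  by (simp add: quat_eq_iff power2_eq_square algebra_simps)

lemma qreal_mult: "qreal a * qreal b = qreal (a * b)"
  by (simp add: quat_eq_iff)

lemma qreal_one: "qreal 1 = 1" by (simp add: quat_eq_iff)
lemma qreal_zero: "qreal 0 = 0" by (simp add: quat_eq_iff)

lemma qreal_comm: "qreal r * p = p * qreal r"
  by (simp add: quat_eq_iff algebra_simps)

instance quat :: division_ring
proof
  fix a :: quat assume "a \<noteq> 0"
  then have h: "qre a ^ 2 + qi a ^ 2 + qj a ^ 2 + qk a ^ 2 \<noteq> 0" by (rule qnz)
  have "inverse a * a = qreal (1 / (qre a ^ 2 + qi a ^ 2 + qj a ^ 2 + qk a ^ 2)) * (qcnj a * a)"
    by (simp only: inv_eq mult.assoc)
  also have "\<dots> = 1" using h by (simp only: cnj_mult_self qreal_mult) (simp add: quat_eq_iff)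
  finally show "inverse a * a = 1" .
  have "a * inverse a = (a * qcnj a) * qreal (1 / (qre a ^ 2 + qi a ^ 2 + qj a ^ 2 + qk a ^ 2))"
    by (simp only: inv_eq mult.assoc) (simp add: quat_eq_iff algebra_simps)
  also have "\<dots> = 1" using h by (simp only: mult_cnj_self qreal_mult) (simp add: quat_eq_iff)
  finally show "a * inverse a = 1" .
next
  fix a b :: quat show "a / b = a * inverse b" by (simp add: divide_quat_def)
next
  show "inverse (0::quat) = 0" by (simp add: quat_eq_iff)
qed


instantiation quat :: real_algebra_1
begin
definition scaleR_quat :: "real \<Rightarrow> quat \<Rightarrow> quat" where
  "scaleR_quat r x = Quat (r * qre x) (r * qi x) (r * qj x) (r * qk x)"
instance
  by standard (simp_all add: quat_eq_iff scaleR_quat_def algebra_simps)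
end

lemma qsimps3 [simp]:
  "qre (scaleR r p) = r * qre p" "qi (scaleR r p) = r * qi p" "qj (scaleR r p) = r * qj p" "qk (scaleR r p) = r * qk p"
  by (simp_all add: scaleR_quat_def)

lemma cs4: "(a*e+b*f+c*g+d*h)^2 \<le> (a^2+b^2+c^2+d^2)*(e^2+f^2+g^2+h^2)" for a b c d e f g h :: real
proof -
  have "(a^2+b^2+c^2+d^2)*(e^2+f^2+g^2+h^2) - (a*e+b*f+c*g+d*h)^2 =
    (a*f-b*e)^2 + (a*g-c*e)^2 + (a*h-d*e)^2 + (b*g-c*f)^2 + (b*h-d*f)^2 + (c*h-d*g)^2"
    by (simp add: power2_eq_square algebra_simps)
  moreover have "(a*f-b*e)^2 + (a*g-c*e)^2 + (a*h-d*e)^2 + (b*g-c*f)^2 + (b*h-d*f)^2 + (c*h-d*g)^2 \<ge> 0"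
    by simp
  ultimately show ?thesis by linarith
qed

lemma tri4: "sqrt ((a+e)^2+(b+f)^2+(c+g)^2+(d+h)^2) \<le> sqrt (a^2+b^2+c^2+d^2) + sqrt (e^2+f^2+g^2+h^2)"
  for a b c d e f g h :: real
proof -
  let ?x = "sqrt (a^2+b^2+c^2+d^2)" and ?y = "sqrt (e^2+f^2+g^2+h^2)"
  have x2: "?x^2 = a^2+b^2+c^2+d^2" and y2: "?y^2 = e^2+f^2+g^2+h^2" by simp_all
  have "a*e+b*f+c*g+d*h \<le> ?x * ?y"
  proof -
    have "(a*e+b*f+c*g+d*h)^2 \<le> (?x*?y)^2" using cs4[of a e b f c g d h] by (simp add: power_mult_distrib)
    then have "\<bar>a*e+b*f+c*g+d*h\<bar> \<le> \<bar>?x*?y\<bar>" using abs_le_square_iff by blast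
    then show ?thesis by simp
  qed
  then have "(a+e)^2+(b+f)^2+(c+g)^2+(d+h)^2 \<le> (?x + ?y)^2"
    by (simp add: power2_eq_square algebra_simps x2[unfolded power2_eq_square] y2[unfolded power2_eq_square])
  then have "sqrt ((a+e)^2+(b+f)^2+(c+g)^2+(d+h)^2) \<le> sqrt ((?x + ?y)^2)" by (rule real_sqrt_le_mono)
  then show ?thesis by simp
qed

instantiation quat :: real_normed_div_algebra
begin
definition norm_quat :: "quat \<Rightarrow> real" where "norm_quat z = qnorm z"
definition sgn_quat_def: "sgn x = x /\<^sub>R norm (x::quat)"
definition dist_quat_def: "dist x y = norm ((x::quat) - y)"
definition uniformity_quat_def [code del]:
  "(uniformity :: (quat \<times> quat) filter) = (INF e\<in>{0 <..}. principal {(x, y). dist x y < e})"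
definition open_quat_def [code del]:
  "open (U :: quat set) \<longleftrightarrow> (\<forall>x\<in>U. eventually (\<lambda>(x', y). x' = x \<longrightarrow> y \<in> U) uniformity)"
instance
proof
  fix r :: real and x y :: quat
  show "(norm x = 0) = (x = 0)"
    by (simp add: norm_quat_def qnorm_def quat_eq_iff) (smt (verit) power2_less_eq_zero_iff sum_power2_eq_zero_iff)
  show "norm (x + y) \<le> norm x + norm y"
    using tri4 by (simp add: norm_quat_def qnorm_def)
  show "norm (scaleR r x) = \<bar>r\<bar> * norm x"
    by (simp add: norm_quat_def qnorm_def power_mult_distrib distrib_left [symmetric] real_sqrt_mult)
  show "norm (x * y) = norm x * norm y"
    by (simp add: norm_quat_def qnorm_def real_sqrt_mult [symmetric] power2_eq_square algebra_simps)
qed (rule sgn_quat_def dist_quat_def open_quat_def uniformity_quat_def)+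
end

lemma qnorm_norm: "qnorm p = norm p" by (simp add: norm_quat_def)

lemma qreal_of_real: "qreal r = of_real r"
  by (simp add: quat_eq_iff of_real_def)

lemma qcnj_mult: "qcnj (p * q) = qcnj q * qcnj p"
  by (simp add: quat_eq_iff algebra_simps)
lemma qcnj_add: "qcnj (p + q) = qcnj p + qcnj q"
  by (simp add: quat_eq_iff)
lemma qcnj_diff: "qcnj (p - q) = qcnj p - qcnj q"
  by (simp add: quat_eq_iff)
lemma qcnj_minus: "qcnj (- p) = - qcnj p"
  by (simp add: quat_eq_iff)
lemma qcnj_qcnj [simp]: "qcnj (qcnj p) = p"
  by (simp add: quat_eq_iff)
lemma qcnj_of_real [simp]: "qcnj (of_real r) = of_real r"
  by (simp add: quat_eq_iff of_real_def)
lemma qcnj_0 [simp]: "qcnj 0 = 0" by (simp add: quat_eq_iff)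
lemma qcnj_1 [simp]: "qcnj 1 = 1" by (simp add: quat_eq_iff)
lemma qcnj_sum: "qcnj (sum f A) = (\<Sum>a\<in>A. qcnj (f a))"
  by (induction A rule: infinite_finite_induct) (auto simp: qcnj_add)
lemma norm_qcnj [simp]: "norm (qcnj p) = norm p"
  by (simp add: norm_quat_def qnorm_def)
lemma cnj_mult_norm: "qcnj p * p = of_real ((norm p)^2)"
  by (simp add: quat_eq_iff norm_quat_def qnorm_def of_real_def power2_eq_square algebra_simps)
lemma mult_cnj_norm: "p * qcnj p = of_real ((norm p)^2)"
  by (simp add: quat_eq_iff norm_quat_def qnorm_def of_real_def power2_eq_square algebra_simps)
lemma of_real_comm: "of_real r * (p::quat) = p * of_real r"
  by (simp add: quat_eq_iff of_real_def algebra_simps)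




lemma mmul_assoc: "mmul n (mmul n A B) C = mmul n A (mmul n B C)"
proof (rule ext, rule ext)
  fix i j
  show "mmul n (mmul n A B) C i j = mmul n A (mmul n B C) i j"
  proof (cases "i \<le> n \<and> j \<le> n")
    case True
    have "mmul n (mmul n A B) C i j = (\<Sum>k\<le>n. (\<Sum>l\<le>n. A i l * B l k) * C k j)"
      using True by (simp add: mmul_def)
    also have "\<dots> = (\<Sum>k\<le>n. \<Sum>l\<le>n. A i l * B l k * C k j)"
      by (simp add: sum_distrib_right)
    also have "\<dots> = (\<Sum>l\<le>n. \<Sum>k\<le>n. A i l * (B l k * C k j))"
      by (subst sum.swap) (simp add: mult.assoc)
    also have "\<dots> = (\<Sum>l\<le>n. A i l * (\<Sum>k\<le>n. B l k * C k j))"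
      by (simp add: sum_distrib_left)
    also have "\<dots> = mmul n A (mmul n B C) i j"
      using True by (simp add: mmul_def)
    finally show ?thesis .
  qed (auto simp: mmul_def)
qed

lemma is_mat_mmul [simp]: "is_mat n (mmul n A B)"
  by (auto simp: is_mat_def mmul_def)
lemma is_mat_mid [simp]: "is_mat n (mid n)"
  by (auto simp: is_mat_def mid_def)
lemma is_mat_madj [simp]: "is_mat n (madj n A)"
  by (auto simp: is_mat_def madj_def)
lemma is_mat_J [simp]: "is_mat n (Jform n)"
  by (auto simp: is_mat_def Jform_def)

lemma mmul_mid_left: "is_mat n A \<Longrightarrow> mmul n (mid n) A = A"
  by (auto simp: mmul_def mid_def is_mat_def if_distrib[of "\<lambda>x. x * _"] cong: if_cong intro!: ext)
lemma mmul_mid_right: "is_mat n A \<Longrightarrow> mmul n A (mid n) = A"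
  by (auto simp: mmul_def mid_def is_mat_def if_distrib[of "\<lambda>x. _ * x"] cong: if_cong intro!: ext)

lemma madj_mmul: "madj n (mmul n A B) = mmul n (madj n B) (madj n A)"
  by (auto simp: madj_def mmul_def qcnj_sum qcnj_mult intro!: ext)

lemma madj_madj: "is_mat n A \<Longrightarrow> madj n (madj n A) = A"
  by (auto simp: madj_def is_mat_def intro!: ext)

definition jdiag :: "nat \<Rightarrow> nat \<Rightarrow> quat" where
  "jdiag n i = (if i < n then 1 else -1)"

lemma Jform_alt: "Jform n i j = (if i = j \<and> i \<le> n then jdiag n i else 0)"
  by (auto simp: Jform_def jdiag_def)

lemma madj_J [simp]: "madj n (Jform n) = Jform n"
  by (auto simp: madj_def Jform_def quat_eq_iff intro!: ext)

lemma mmul_J_right: "mmul n A (Jform n) = (\<lambda>i j. if i \<le> n \<and> j \<le> n then A i j * jdiag n j else 0)"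
  by (auto simp: mmul_def Jform_alt if_distrib[of "\<lambda>x. _ * x"] cong: if_cong intro!: ext)
lemma mmul_J_left: "mmul n (Jform n) A = (\<lambda>i j. if i \<le> n \<and> j \<le> n then jdiag n i * A i j else 0)"
  by (auto simp: mmul_def Jform_alt if_distrib[of "\<lambda>x. x * _"] cong: if_cong intro!: ext)

lemma jdiag_sq [simp]: "jdiag n i * jdiag n i = 1"
  by (simp add: jdiag_def)

lemma J_J: "mmul n (Jform n) (Jform n) = mid n"
  by (auto simp: mmul_J_left Jform_alt mid_def intro!: ext)


definition qcomp :: "nat \<Rightarrow> quat \<Rightarrow> real" where
  "qcomp r q = (if r = 0 then qre q else if r = 1 then qi q else if r = 2 then qj q else qk q)"
definition bq :: "nat \<Rightarrow> quat" where
  "bq s = Quat (if s = 0 then 1 else 0) (if s = 1 then 1 else 0) (if s = 2 then 1 else 0) (if s = 3 then 1 else 0)"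

lemma qcomp_add: "qcomp r (a + b) = qcomp r a + qcomp r b"
  by (simp add: qcomp_def)
lemma qcomp_sum: "qcomp r (sum f A) = (\<Sum>x\<in>A. qcomp r (f x))"
  by (induction A rule: infinite_finite_induct) (auto simp: qcomp_add qcomp_def)

lemma qcomp_expand: "(\<Sum>s<4. qcomp r (a * bq s) * qcomp s y) = qcomp r (a * y)"
  by (simp add: numeral_eq_Suc qcomp_def bq_def algebra_simps)

lemma quat_comp_eq: "(\<And>r. r < 4 \<Longrightarrow> qcomp r a = qcomp r b) \<Longrightarrow> a = b"
proof -
  assume h: "\<And>r. r < 4 \<Longrightarrow> qcomp r a = qcomp r b"
  have "qcomp 0 a = qcomp 0 b" "qcomp 1 a = qcomp 1 b" "qcomp 2 a = qcomp 2 b" "qcomp 3 a = qcomp 3 b"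
    using h by auto
  then show ?thesis by (simp add: qcomp_def quat_eq_iff)
qed

definition rho :: "nat \<Rightarrow> qmat \<Rightarrow> real mat" where
  "rho n M = mat (4 * Suc n) (4 * Suc n) (\<lambda>(i, j). qcomp (i mod 4) (M (i div 4) (j div 4) * bq (j mod 4)))"

lemma rho_carrier: "rho n M \<in> carrier_mat (4 * Suc n) (4 * Suc n)"
  by (simp add: rho_def)

lemma sum_group4: "(\<Sum>k<4 * Suc n. f k) = (\<Sum>K\<le>n. \<Sum>s<4. f (K * 4 + s))"
proof -
  have "(\<Sum>k<4 * Suc n. f k) = (\<Sum>K<Suc n. sum f {K * 4..<K * 4 + 4})"
    using sum.nat_group[where g=f and k=4 and n="Suc n"] by (simp add: mult.commute)
  also have "\<dots> = (\<Sum>K\<le>n. \<Sum>s<4. f (K * 4 + s))"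
  proof (rule sum.cong)
    fix K
    show "sum f {K * 4..<K * 4 + 4} = (\<Sum>s<4. f (K * 4 + s))"
      using sum.shift_bounds_nat_ivl[where g=f and m=0 and k="K*4" and n=4] by (simp add: atLeast0LessThan add.commute)
  qed (auto simp: lessThan_Suc_atMost)
  finally show ?thesis .
qed

lemma rho_mult: "rho n (mmul n A B) = rho n A * rho n B"
proof (rule eq_matI)
  fix i j assume i: "i < dim_row (rho n A * rho n B)" and j: "j < dim_col (rho n A * rho n B)"
  then have i': "i < 4 * Suc n" and j': "j < 4 * Suc n" by (simp_all add: rho_def)
  then have I: "i div 4 \<le> n" and Jn: "j div 4 \<le> n" by auto
  have "(rho n A * rho n B) $$ (i, j) = (\<Sum>k<4 * Suc n. rho n A $$ (i, k) * rho n B $$ (k, j))"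
    using i' j' by (simp add: rho_def scalar_prod_def atLeast0LessThan)
  also have "\<dots> = (\<Sum>k<4 * Suc n. qcomp (i mod 4) (A (i div 4) (k div 4) * bq (k mod 4)) *
        qcomp (k mod 4) (B (k div 4) (j div 4) * bq (j mod 4)))"
    using i' j' by (intro sum.cong) (simp_all add: rho_def)
  also have "\<dots> = (\<Sum>K\<le>n. \<Sum>s<4. qcomp (i mod 4) (A (i div 4) K * bq s) *
        qcomp s (B K (j div 4) * bq (j mod 4)))"
    by (subst sum_group4) simp
  also have "\<dots> = (\<Sum>K\<le>n. qcomp (i mod 4) (A (i div 4) K * (B K (j div 4) * bq (j mod 4))))"
    by (simp add: qcomp_expand)
  also have "\<dots> = qcomp (i mod 4) ((\<Sum>K\<le>n. A (i div 4) K * B K (j div 4)) * bq (j mod 4))"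
    by (simp add: qcomp_sum sum_distrib_right mult.assoc)
  also have "\<dots> = rho n (mmul n A B) $$ (i, j)"
    using i' j' I Jn by (simp add: rho_def mmul_def)
  finally show "rho n (mmul n A B) $$ (i, j) = (rho n A * rho n B) $$ (i, j)" by simp
qed (simp_all add: rho_def)

lemma rho_mid: "rho n (mid n) = 1\<^sub>m (4 * Suc n)"
proof (rule eq_matI)
  fix i j assume "i < dim_row (1\<^sub>m (4 * Suc n) :: real mat)" "j < dim_col (1\<^sub>m (4 * Suc n) :: real mat)"
  then have i': "i < 4 * Suc n" and j': "j < 4 * Suc n" by simp_all
  have "i = j \<longleftrightarrow> i div 4 = j div 4 \<and> i mod 4 = j mod 4"
    by (metis div_mult_mod_eq)
  moreover have "j mod 4 < 4" by simp
  then have "qcomp (i mod 4) (bq (j mod 4)) = (if i mod 4 = j mod 4 then 1 else 0)"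
    by (auto simp: qcomp_def bq_def)
  moreover have "rho n (mid n) $$ (i, j) = (if i div 4 = j div 4 then qcomp (i mod 4) (bq (j mod 4)) else 0)"
  proof -
    have "j div 4 \<le> n" using j' by auto
    then show ?thesis using i' j' by (simp add: rho_def mid_def) (simp add: qcomp_def)
  qed
  moreover have "1\<^sub>m (4 * Suc n) $$ (i, j) = (if i = j then 1 else (0::real))"
    using i' j' by simp
  ultimately show "rho n (mid n) $$ (i, j) = 1\<^sub>m (4 * Suc n) $$ (i, j)"
    by (simp only:) auto
qed (simp_all add: rho_def)

lemma rho_inj: assumes "rho n A = rho n B" "i \<le> n" "j \<le> n" shows "A i j = B i j"
proof (rule quat_comp_eq)
  fix r :: nat assume r: "r < 4"
  have "rho n A $$ (4 * i + r, 4 * j) = rho n B $$ (4 * i + r, 4 * j)" using assms by simp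
  moreover have "4 * i + r < 4 * Suc n" "4 * j < 4 * Suc n" using assms r by auto
  ultimately show "qcomp r (A i j) = qcomp r (B i j)"
    using r by (simp add: rho_def bq_def quat_eq_iff[symmetric] one_quat_def[symmetric])
qed

lemma left_right_inv:
  assumes A: "is_mat n A" and B: "is_mat n B" and BA: "mmul n B A = mid n"
  shows "mmul n A B = mid n"
proof -
  have "rho n B * rho n A = 1\<^sub>m (4 * Suc n)" using BA by (simp add: rho_mult[symmetric] rho_mid)
  then have "rho n A * rho n B = 1\<^sub>m (4 * Suc n)"
    using mat_mult_left_right_inverse[OF rho_carrier rho_carrier] by blast
  then have e: "rho n (mmul n A B) = rho n (mid n)" by (simp add: rho_mult rho_mid)
  show ?thesis
  proof (rule ext, rule ext)
    fix i j show "mmul n A B i j = mid n i j"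
    proof (cases "i \<le> n \<and> j \<le> n")
      case True then show ?thesis using rho_inj[OF e] by blast
    qed (auto simp: mmul_def mid_def)
  qed
qed




lemma jdiag_of_real: "jdiag n k = of_real (if k < n then 1 else -1)"
  by (simp add: jdiag_def)
lemma jdiag_comm: "jdiag n k * p = p * jdiag n k"
  by (simp add: jdiag_of_real of_real_comm)
lemma qcnj_jdiag [simp]: "qcnj (jdiag n k) = jdiag n k"
  by (simp add: jdiag_of_real)

definition ginv :: "nat \<Rightarrow> qmat \<Rightarrow> qmat" where
  "ginv n g = mmul n (Jform n) (mmul n (madj n g) (Jform n))"

lemma Sp_is_mat: "g \<in> Sp n \<Longrightarrow> is_mat n g" by (simp add: Sp_def)
lemma Sp_eq: "g \<in> Sp n \<Longrightarrow> mmul n (madj n g) (mmul n (Jform n) g) = Jform n"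
  by (simp add: Sp_def mmul_assoc)

lemma J_J_X: "is_mat n X \<Longrightarrow> mmul n (Jform n) (mmul n (Jform n) X) = X"
  by (simp add: mmul_assoc[symmetric] J_J mmul_mid_left)

lemma Sp_eq_X: "g \<in> Sp n \<Longrightarrow> mmul n (madj n g) (mmul n (Jform n) (mmul n g X)) = mmul n (Jform n) X"
  by (simp add: mmul_assoc[symmetric]) (simp add: mmul_assoc Sp_eq)

lemma ginv_left: "g \<in> Sp n \<Longrightarrow> mmul n (ginv n g) g = mid n"
  by (simp add: ginv_def mmul_assoc Sp_eq J_J)

lemma is_mat_ginv [simp]: "is_mat n (ginv n g)" by (simp add: ginv_def)

lemma ginv_right: "g \<in> Sp n \<Longrightarrow> mmul n g (ginv n g) = mid n"
  by (rule left_right_inv) (simp_all add: Sp_is_mat ginv_left)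

lemma minv_Sp: assumes g: "g \<in> Sp n" shows "minv n g = ginv n g"
  unfolding minv_def
proof (rule the_equality)
  show "is_mat n (ginv n g) \<and> mmul n (ginv n g) g = mid n \<and> mmul n g (ginv n g) = mid n"
    using g by (simp add: ginv_left ginv_right)
next
  fix B assume B: "is_mat n B \<and> mmul n B g = mid n \<and> mmul n g B = mid n"
  have "B = mmul n B (mmul n g (ginv n g))" using B g by (simp add: ginv_right mmul_mid_right)
  also have "\<dots> = ginv n g" using B by (simp add: mmul_assoc[symmetric] mmul_mid_left)
  finally show "B = ginv n g" .
qed

lemma Sp_eq2: assumes g: "g \<in> Sp n" shows "mmul n g (mmul n (Jform n) (madj n g)) = Jform n"
proof -
  have "mmul n g (mmul n (Jform n) (mmul n (madj n g) (Jform n))) = mid n"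
    using ginv_right[OF g] by (simp add: ginv_def)
  then have "mmul n (mmul n g (mmul n (Jform n) (madj n g))) (Jform n) = mid n"
    by (simp add: mmul_assoc)
  then have "mmul n (mmul n (mmul n g (mmul n (Jform n) (madj n g))) (Jform n)) (Jform n) = Jform n"
    by (simp add: mmul_mid_left)
  then show ?thesis by (simp add: mmul_assoc J_J mmul_mid_right)
qed

lemma Sp_mmul: assumes "A \<in> Sp n" "B \<in> Sp n" shows "mmul n A B \<in> Sp n"
  using assms by (simp add: Sp_def madj_mmul mmul_assoc Sp_eq_X)

lemma madj_mid [simp]: "madj n (mid n) = mid n"
  by (auto simp: madj_def mid_def intro!: ext)

lemma mid_Sp: "mid n \<in> Sp n"
  by (simp add: Sp_def mmul_mid_left mmul_mid_right)


lemma Sp_eq2_X: "g \<in> Sp n \<Longrightarrow> mmul n g (mmul n (Jform n) (mmul n (madj n g) X)) = mmul n (Jform n) X"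
  by (simp add: mmul_assoc[symmetric]) (simp add: mmul_assoc Sp_eq2)

lemma ginv_Sp: assumes g: "g \<in> Sp n" shows "ginv n g \<in> Sp n"
proof -
  have m: "is_mat n g" using g by (rule Sp_is_mat)
  have "madj n (ginv n g) = mmul n (Jform n) (mmul n g (Jform n))"
    by (simp add: ginv_def madj_mmul madj_madj[OF m] mmul_assoc)
  then show ?thesis
    using g m by (simp add: Sp_def ginv_def mmul_assoc J_J_X Sp_eq2_X)
qed

definition mv :: "nat \<Rightarrow> qmat \<Rightarrow> (nat \<Rightarrow> quat) \<Rightarrow> (nat \<Rightarrow> quat)" where
  "mv n M z = (\<lambda>i. if i \<le> n then (\<Sum>k\<le>n. M i k * z k) else 0)"

definition is_vec :: "nat \<Rightarrow> (nat \<Rightarrow> quat) \<Rightarrow> bool" where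
  "is_vec n z \<longleftrightarrow> (\<forall>i. n < i \<longrightarrow> z i = 0)"

definition ev :: "nat \<Rightarrow> nat \<Rightarrow> quat" where
  "ev j = (\<lambda>i. if i = j then 1 else 0)"

definition col :: "qmat \<Rightarrow> nat \<Rightarrow> nat \<Rightarrow> quat" where
  "col M j = (\<lambda>i. M i j)"

definition vsc :: "(nat \<Rightarrow> quat) \<Rightarrow> quat \<Rightarrow> nat \<Rightarrow> quat" where
  "vsc z q = (\<lambda>i. z i * q)"

lemma mv_mmul: "mv n (mmul n A B) z = mv n A (mv n B z)"
proof (rule ext)
  fix i show "mv n (mmul n A B) z i = mv n A (mv n B z) i"
  proof (cases "i \<le> n")
    case True
    have "mv n (mmul n A B) z i = (\<Sum>k\<le>n. \<Sum>l\<le>n. A i l * B l k * z k)"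
      using True by (simp add: mv_def mmul_def sum_distrib_right)
    also have "\<dots> = (\<Sum>l\<le>n. A i l * (\<Sum>k\<le>n. B l k * z k))"
      by (subst sum.swap) (simp add: sum_distrib_left mult.assoc)
    also have "\<dots> = mv n A (mv n B z) i"
      using True by (simp add: mv_def)
    finally show ?thesis .
  qed (simp add: mv_def)
qed

lemma is_vec_mv [simp]: "is_vec n (mv n M z)" by (simp add: is_vec_def mv_def)

lemma mv_mid: "is_vec n z \<Longrightarrow> mv n (mid n) z = z"
  by (auto simp: mv_def mid_def is_vec_def if_distrib[of "\<lambda>x. x * _"] cong: if_cong intro!: ext)

lemma mv_ev: "j \<le> n \<Longrightarrow> is_mat n M \<Longrightarrow> mv n M (ev j) = col M j"
  by (auto simp: mv_def ev_def col_def is_mat_def if_distrib[of "\<lambda>x. _ * x"] cong: if_cong intro!: ext)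

lemma mv_add: "mv n M (a + b) = mv n M a + mv n M b"
  by (auto simp: mv_def distrib_left sum.distrib intro!: ext)
lemma mv_diff: "mv n M (a - b) = mv n M a - mv n M b"
  by (auto simp: mv_def right_diff_distrib sum_subtractf intro!: ext)
lemma mv_vsc: "mv n M (vsc a q) = vsc (mv n M a) q"
  by (auto simp: mv_def vsc_def sum_distrib_right mult.assoc intro!: ext)

definition jip :: "nat \<Rightarrow> (nat \<Rightarrow> quat) \<Rightarrow> (nat \<Rightarrow> quat) \<Rightarrow> quat" where
  "jip n a b = (\<Sum>k\<le>n. qcnj (a k) * jdiag n k * b k)"

lemma jip_add_right: "jip n a (b + c) = jip n a b + jip n a c"
  by (simp add: jip_def distrib_left sum.distrib)
lemma jip_diff_right: "jip n a (b - c) = jip n a b - jip n a c"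
  by (simp add: jip_def right_diff_distrib sum_subtractf)
lemma jip_add_left: "jip n (a + b) c = jip n a c + jip n b c"
  by (simp add: jip_def distrib_right qcnj_add sum.distrib)
lemma jip_diff_left: "jip n (a - b) c = jip n a c - jip n b c"
  by (simp add: jip_def left_diff_distrib qcnj_diff sum_subtractf)
lemma jip_vsc_right: "jip n a (vsc b q) = jip n a b * q"
  by (simp add: jip_def vsc_def sum_distrib_right mult.assoc)
lemma jip_vsc_left: "jip n (vsc a q) b = qcnj q * jip n a b"
proof -
  have "jip n (vsc a q) b = (\<Sum>k\<le>n. qcnj q * (qcnj (a k) * jdiag n k * b k))"
    unfolding jip_def vsc_def qcnj_mult
    by (rule sum.cong) (simp_all add: mult.assoc jdiag_comm)
  then show ?thesis by (simp add: jip_def sum_distrib_left)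
qed
lemma jip_cnj: "qcnj (jip n a b) = jip n b a"
  unfolding jip_def qcnj_sum
  by (rule sum.cong) (simp_all add: qcnj_mult mult.assoc jdiag_comm)

lemma madjJ_entry: "i \<le> n \<Longrightarrow> j \<le> n \<Longrightarrow> mmul n (madj n g) (mmul n (Jform n) g) i j = jip n (col g i) (col g j)"
  unfolding mmul_J_left by (simp add: mmul_def madj_def jip_def col_def mult.assoc)

lemma Sp_cols: assumes "is_mat n g" "\<And>i j. i \<le> n \<Longrightarrow> j \<le> n \<Longrightarrow> jip n (col g i) (col g j) = Jform n i j"
  shows "g \<in> Sp n"
proof -
  have "mmul n (madj n g) (mmul n (Jform n) g) = Jform n"
  proof (rule ext, rule ext)
    fix i j show "mmul n (madj n g) (mmul n (Jform n) g) i j = Jform n i j"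
    proof (cases "i \<le> n \<and> j \<le> n")
      case True then show ?thesis using assms by (simp add: madjJ_entry)
    qed (auto simp: mmul_def Jform_def)
  qed
  then show ?thesis using assms by (simp add: Sp_def mmul_assoc)
qed

lemma Sp_cols_eq: "g \<in> Sp n \<Longrightarrow> i \<le> n \<Longrightarrow> j \<le> n \<Longrightarrow> jip n (col g i) (col g j) = Jform n i j"
  using madjJ_entry[of i n j g] Sp_eq[of g n] by simp

lemma sum3: "(\<Sum>k\<in>A. \<Sum>m\<in>B. \<Sum>l\<in>C. F k l m) = (\<Sum>l\<in>C. \<Sum>m\<in>B. \<Sum>k\<in>A. F k l m)"
proof -
  have "(\<Sum>k\<in>A. \<Sum>m\<in>B. \<Sum>l\<in>C. F k l m) = (\<Sum>m\<in>B. \<Sum>k\<in>A. \<Sum>l\<in>C. F k l m)" by (rule sum.swap)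
  also have "\<dots> = (\<Sum>m\<in>B. \<Sum>l\<in>C. \<Sum>k\<in>A. F k l m)" by (rule sum.cong[OF refl], rule sum.swap)
  also have "\<dots> = (\<Sum>l\<in>C. \<Sum>m\<in>B. \<Sum>k\<in>A. F k l m)" by (rule sum.swap)
  finally show ?thesis .
qed

lemma jip_mv: assumes g: "g \<in> Sp n" shows "jip n (mv n g a) (mv n g b) = jip n a b"
proof -
  have "jip n (mv n g a) (mv n g b) = (\<Sum>k\<le>n. \<Sum>m\<le>n. \<Sum>l\<le>n. qcnj (a l) * (qcnj (g k l) * (jdiag n k * (g k m * b m))))"
    unfolding jip_def mv_def
    by (simp add: qcnj_sum qcnj_mult sum_distrib_left sum_distrib_right mult.assoc)
  also have "\<dots> = (\<Sum>l\<le>n. \<Sum>m\<le>n. \<Sum>k\<le>n. qcnj (a l) * (qcnj (g k l) * (jdiag n k * (g k m * b m))))"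
    by (rule sum3)
  also have "\<dots> = (\<Sum>l\<le>n. \<Sum>m\<le>n. qcnj (a l) * (\<Sum>k\<le>n. qcnj (g k l) * jdiag n k * g k m) * b m)"
    by (simp add: sum_distrib_left sum_distrib_right mult.assoc)
  also have "\<dots> = (\<Sum>l\<le>n. \<Sum>m\<le>n. qcnj (a l) * Jform n l m * b m)"
    using Sp_cols_eq[OF g] by (simp add: jip_def col_def)
  also have "\<dots> = jip n a b"
    by (simp add: Jform_alt jip_def if_distrib[of "\<lambda>x. _ * x"] if_distrib[of "\<lambda>x. x * _"] cong: if_cong)
  finally show ?thesis .
qed


lemma sum_atMost_split: "(\<Sum>k\<le>n. f k) = (\<Sum>k<n. f k) + f n" for n :: nat
  by (metis lessThan_Suc_atMost sum.lessThan_Suc)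

lemma sum_two: fixes n :: nat assumes "0 < n" "\<And>k. k \<le> n \<Longrightarrow> k \<noteq> 0 \<Longrightarrow> k \<noteq> n \<Longrightarrow> f k = 0"
  shows "(\<Sum>k\<le>n. f k) = f 0 + f n"
proof -
  have "(\<Sum>k\<le>n. f k) = (\<Sum>k\<in>{0, n}. f k)"
    using assms by (rule_tac sum.mono_neutral_right) auto
  then show ?thesis using assms by simp
qed

lemma expH_alt: "expH n t i j = (if (i = 0 \<and> j = 0) \<or> (i = n \<and> j = n) then of_real (cosh t)
      else if (i = 0 \<and> j = n) \<or> (i = n \<and> j = 0) then of_real (sinh t)
      else if i = j \<and> i < n then 1 else 0)"
  by (simp add: expH_def qreal_of_real)

lemma is_mat_expH [simp]: "is_mat n (expH n t)"
  by (auto simp: is_mat_def expH_def)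

lemma mmul_expH_right: assumes n: "0 < n"
  shows "mmul n A (expH n t) i j = (if i \<le> n \<and> j \<le> n then
     (if j = 0 then A i 0 * of_real (cosh t) + A i n * of_real (sinh t)
      else if j = n then A i 0 * of_real (sinh t) + A i n * of_real (cosh t) else A i j) else 0)"
proof (cases "i \<le> n \<and> j \<le> n")
  case True
  show ?thesis
  proof (cases "j = 0 \<or> j = n")
    case True
    then show ?thesis using n \<open>i \<le> n \<and> j \<le> n\<close>
      by (auto simp: mmul_def sum_two[OF n] expH_alt)
  next
    case False
    have "mmul n A (expH n t) i j = (\<Sum>k\<le>n. A i k * expH n t k j)"
      using \<open>i \<le> n \<and> j \<le> n\<close> by (simp add: mmul_def)
    also have "\<dots> = (\<Sum>k\<le>n. if k = j then A i k else 0)"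
      using False by (intro sum.cong) (auto simp: expH_alt)
    finally have "mmul n A (expH n t) i j = (\<Sum>k\<le>n. if k = j then A i k else 0)" .
    then show ?thesis using False \<open>i \<le> n \<and> j \<le> n\<close> by simp
  qed
qed (auto simp: mmul_def)

lemma mmul_expH_left: assumes n: "0 < n"
  shows "mmul n (expH n t) A i j = (if i \<le> n \<and> j \<le> n then
     (if i = 0 then of_real (cosh t) * A 0 j + of_real (sinh t) * A n j
      else if i = n then of_real (sinh t) * A 0 j + of_real (cosh t) * A n j else A i j) else 0)"
proof (cases "i \<le> n \<and> j \<le> n")
  case True
  show ?thesis
  proof (cases "i = 0 \<or> i = n")
    case True
    then show ?thesis using n \<open>i \<le> n \<and> j \<le> n\<close>
      by (auto simp: mmul_def sum_two[OF n] expH_alt)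
  next
    case False
    have "mmul n (expH n t) A i j = (\<Sum>k\<le>n. expH n t i k * A k j)"
      using \<open>i \<le> n \<and> j \<le> n\<close> by (simp add: mmul_def)
    also have "\<dots> = (\<Sum>k\<le>n. if k = i then A k j else 0)"
      using False by (intro sum.cong) (auto simp: expH_alt)
    finally have "mmul n (expH n t) A i j = (\<Sum>k\<le>n. if k = i then A k j else 0)" .
    then show ?thesis using False \<open>i \<le> n \<and> j \<le> n\<close> by simp
  qed
qed (auto simp: mmul_def)

lemma mv_expH: assumes n: "0 < n"
  shows "mv n (expH n t) z i = (if i \<le> n then
     (if i = 0 then of_real (cosh t) * z 0 + of_real (sinh t) * z n
      else if i = n then of_real (sinh t) * z 0 + of_real (cosh t) * z n else z i) else 0)"
proof (cases "i \<le> n")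
  case True
  show ?thesis
  proof (cases "i = 0 \<or> i = n")
    case True
    then show ?thesis using n \<open>i \<le> n\<close>
      by (auto simp: mv_def sum_two[OF n] expH_alt)
  next
    case False
    have "mv n (expH n t) z i = (\<Sum>k\<le>n. expH n t i k * z k)"
      using \<open>i \<le> n\<close> by (simp add: mv_def)
    also have "\<dots> = (\<Sum>k\<le>n. if k = i then z k else 0)"
      using False by (intro sum.cong) (auto simp: expH_alt)
    finally have "mv n (expH n t) z i = (\<Sum>k\<le>n. if k = i then z k else 0)" .
    then show ?thesis using False \<open>i \<le> n\<close> by simp
  qed
qed (auto simp: mv_def)

lemma expH_add: assumes n: "0 < n" shows "mmul n (expH n s) (expH n t) = expH n (s + t)"
proof (rule ext, rule ext)
  fix i j
  have e1: "of_real (cosh s) * of_real (cosh t) + of_real (sinh s) * of_real (sinh t) = (of_real (cosh (s+t))::quat)"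
    by (simp add: cosh_add flip: of_real_mult of_real_add)
  have e2: "of_real (sinh s) * of_real (cosh t) + of_real (cosh s) * of_real (sinh t) = (of_real (sinh (s+t))::quat)"
    by (simp add: sinh_add flip: of_real_mult of_real_add)
  have e3: "of_real (cosh s) * of_real (sinh t) + of_real (sinh s) * of_real (cosh t) = (of_real (sinh (s+t))::quat)"
    by (simp add: sinh_add algebra_simps flip: of_real_mult of_real_add)
  have e4: "of_real (sinh s) * of_real (sinh t) + of_real (cosh s) * of_real (cosh t) = (of_real (cosh (s+t))::quat)"
    by (simp add: cosh_add algebra_simps flip: of_real_mult of_real_add)
  show "mmul n (expH n s) (expH n t) i j = expH n (s + t) i j"
    using n by (simp only: mmul_expH_right[OF n]) (auto simp: expH_alt e1 e2 e3 e4)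
qed

lemma expH_zero: "expH n 0 = mid n"
  by (auto simp: expH_alt mid_def intro!: ext)

lemma madj_expH [simp]: "madj n (expH n t) = expH n t"
  by (auto simp: madj_def expH_alt is_mat_def intro!: ext)

lemma expH_Sp: assumes n: "0 < n" shows "expH n t \<in> Sp n"
proof -
  have "mmul n (mmul n (expH n t) (Jform n)) (expH n t) = Jform n"
  proof (rule ext, rule ext)
    fix i j
    have c: "cosh t * cosh t - sinh t * sinh t = 1"
      using cosh_square_eq[of t] by (simp add: power2_eq_square)
    let ?X = "mmul n (expH n t) (Jform n)"
    have X: "?X i j = (if i \<le> n \<and> j \<le> n then expH n t i j * jdiag n j else 0)" for i j
      by (simp add: mmul_J_right)
    have "mmul n ?X (expH n t) i j = (if i \<le> n \<and> j \<le> n then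
     (if j = 0 then ?X i 0 * of_real (cosh t) + ?X i n * of_real (sinh t)
      else if j = n then ?X i 0 * of_real (sinh t) + ?X i n * of_real (cosh t) else ?X i j) else 0)"
      by (rule mmul_expH_right[OF n])
    also have "\<dots> = Jform n i j"
    proof -
      have c1: "of_real (cosh t) * of_real (cosh t) + - (of_real (sinh t) * of_real (sinh t)) = (1::quat)"
        using c by (simp only: of_real_mult[symmetric] of_real_minus[symmetric] of_real_add[symmetric]) simp
      have c2: "of_real (sinh t) * of_real (cosh t) + - (of_real (cosh t) * of_real (sinh t)) = (0::quat)"
        by (simp only: of_real_mult[symmetric] of_real_minus[symmetric] of_real_add[symmetric]) simp
      have c3: "of_real (cosh t) * of_real (sinh t) + - (of_real (sinh t) * of_real (cosh t)) = (0::quat)"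
        by (simp only: of_real_mult[symmetric] of_real_minus[symmetric] of_real_add[symmetric]) simp
      have c4: "of_real (sinh t) * of_real (sinh t) + - (of_real (cosh t) * of_real (cosh t)) = (-1::quat)"
      proof -
        have "sinh t * sinh t - cosh t * cosh t = -1" using c by simp
        then have "(of_real (sinh t * sinh t - cosh t * cosh t)::quat) = of_real (-1)" by simp
        then show ?thesis by (simp add: of_real_mult)
      qed
      show ?thesis
        using n c1 c2 c3 c4 by (simp only: X) (auto simp: expH_alt Jform_def jdiag_def)
    qed
    finally show "mmul n ?X (expH n t) i j = Jform n i j" .
  qed
  then show ?thesis by (simp add: Sp_def)
qed

lemma jip_self: "jip n a a = of_real ((\<Sum>k<n. (norm (a k))^2) - (norm (a n))^2)"
proof -
  have "jip n a a = (\<Sum>k\<le>n. jdiag n k * (qcnj (a k) * a k))"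
    unfolding jip_def by (intro sum.cong) (simp_all add: mult.assoc jdiag_comm)
  also have "\<dots> = (\<Sum>k<n. of_real ((norm (a k))^2)) - of_real ((norm (a n))^2)"
    by (simp add: sum_atMost_split cnj_mult_norm jdiag_def)
  finally show ?thesis by simp
qed

lemma row_self: "(\<Sum>k\<le>n. a k * jdiag n k * qcnj (a k)) = of_real ((\<Sum>k<n. (norm (a k))^2) - (norm (a n))^2)"
proof -
  have "(\<Sum>k\<le>n. a k * jdiag n k * qcnj (a k)) = (\<Sum>k\<le>n. jdiag n k * (a k * qcnj (a k)))"
    by (intro sum.cong) (simp_all add: mult.assoc jdiag_comm)
  also have "\<dots> = (\<Sum>k<n. of_real ((norm (a k))^2)) - of_real ((norm (a n))^2)"
    by (simp add: sum_atMost_split mult_cnj_norm jdiag_def)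
  finally show ?thesis by simp
qed

lemma K_entries: "k \<in> Kgrp n \<Longrightarrow> i < n \<Longrightarrow> k i n = 0 \<and> k n i = 0"
  by (simp add: Kgrp_def)

lemma K_Sp: "k \<in> Kgrp n \<Longrightarrow> k \<in> Sp n" by (simp add: Kgrp_def)

lemma col_norm_n: assumes y: "y \<in> Sp n" and z: "\<And>i. i < n \<Longrightarrow> y i n = 0" shows "norm (y n n) = 1"
proof -
  have "jip n (col y n) (col y n) = - 1" using Sp_cols_eq[OF y, of n n] by (simp add: Jform_def)
  moreover have "(\<Sum>k<n. (norm (col y n k))^2) = 0" using z by (simp add: col_def)
  ultimately have "of_real (0 - (norm (y n n))^2) = (of_real (-1) :: quat)"
    by (simp only: jip_self) (simp add: col_def)
  then have "0 - (norm (y n n))^2 = -1" using of_real_eq_iff by blast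
  then have "(norm (y n n))^2 = 1" by simp
  then have "norm (y n n) = 1 \<or> norm (y n n) = -1" by (simp add: power2_eq_1_iff)
  then show ?thesis using norm_ge_zero[of "y n n"] by linarith
qed

lemma K_norm: "k \<in> Kgrp n \<Longrightarrow> norm (k n n) = 1"
  by (rule col_norm_n) (simp_all add: Kgrp_def)

lemma K_from_col: assumes y: "y \<in> Sp n" and z: "\<And>i. i < n \<Longrightarrow> y i n = 0" shows "y \<in> Kgrp n"
proof -
  have nn: "norm (y n n) = 1" by (rule col_norm_n[OF y z])
  have "mmul n y (mmul n (Jform n) (madj n y)) n n = Jform n n n" using Sp_eq2[OF y] by simp
  then have "(\<Sum>k\<le>n. y n k * jdiag n k * qcnj (y n k)) = - 1"
    unfolding mmul_J_left by (simp add: mmul_def madj_def Jform_def mult.assoc)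
  then have "of_real ((\<Sum>k<n. (norm (y n k))^2) - (norm (y n n))^2) = (of_real (-1) :: quat)"
    by (simp add: row_self)
  then have "(\<Sum>k<n. (norm (y n k))^2) = 0" using nn of_real_eq_iff by fastforce
  then have "\<forall>k\<in>{..<n}. (norm (y n k))^2 = 0" by (subst sum_nonneg_eq_0_iff[symmetric]) auto
  then have "\<And>i. i < n \<Longrightarrow> y n i = 0" by simp
  then show ?thesis using y z by (simp add: Kgrp_def)
qed




lemma vsc_apply: "vsc z q i = z i * q" by (simp add: vsc_def)
lemma fun_diff_apply: "(f - g) x = f x - (g x :: 'b::minus)" by (simp add: fun_diff_def)
lemma fun_add_apply: "(f + g) x = f x + (g x :: 'b::plus)" by simp

lemma ev_apply: "ev j i = (if i = j then 1 else 0)" by (simp add: ev_def)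

lemma jip_ev_left: "i \<le> n \<Longrightarrow> jip n (ev i) z = jdiag n i * z i"
  by (simp add: jip_def ev_def if_distrib[of "\<lambda>x. x * _"] if_distrib[of "qcnj"] cong: if_cong)
lemma jip_ev_right: "j \<le> n \<Longrightarrow> jip n z (ev j) = qcnj (z j) * jdiag n j"
  by (simp add: jip_def ev_def if_distrib[of "\<lambda>x. _ * x"] cong: if_cong)


lemma refl_exists:
  fixes w :: "nat \<Rightarrow> quat" and q :: quat
  assumes n: "0 < n" and w0: "\<And>i. n \<le> i \<Longrightarrow> w i = 0" and w1: "(\<Sum>k<n. (norm (w k))^2) = 1"
    and q: "norm q = 1"
  shows "\<exists>k1 \<in> Kgrp n. \<exists>l. norm l = 1 \<and> (\<forall>i<n. k1 i 0 * l = w i) \<and> k1 n n * l = q"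
proof -
  define l where "l = (if w 0 = 0 then 1 else w 0 * of_real (1 / norm (w 0)))"
  have l1: "norm l = 1"
  proof (cases "w 0 = 0")
    case True then show ?thesis by (simp add: l_def)
  next
    case False
    then have "norm l = norm (w 0) * \<bar>1 / norm (w 0)\<bar>" by (simp only: l_def if_False norm_mult norm_of_real)
    then show ?thesis using False by simp
  qed
  have lw: "qcnj (w 0) * l = of_real (norm (w 0))"
  proof (cases "w 0 = 0")
    case True then show ?thesis by (simp add: l_def)
  next
    case False
    then have "qcnj (w 0) * l = of_real ((norm (w 0))^2) * of_real (1 / norm (w 0))"
      by (simp only: l_def if_False mult.assoc[symmetric] cnj_mult_norm)
    also have "\<dots> = of_real ((norm (w 0))^2 * (1 / norm (w 0)))" by (simp only: of_real_mult)
    also have "(norm (w 0))^2 * (1 / norm (w 0)) = norm (w 0)" using False by (simp add: power2_eq_square)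
    finally show ?thesis .
  qed
  have wl: "w 0 = l * of_real (norm (w 0))"
  proof (cases "w 0 = 0")
    case True then show ?thesis by (simp add: l_def)
  next
    case False
    then have "l * of_real (norm (w 0)) = w 0 * of_real (1 / norm (w 0) * norm (w 0))"
      by (simp only: l_def if_False mult.assoc of_real_mult)
    also have "1 / norm (w 0) * norm (w 0) = 1" using False by simp
    finally show ?thesis by simp
  qed
  have ll: "qcnj l * l = 1" using l1 by (simp add: cnj_mult_norm)
  define u where "u = ev 0 * (\<lambda>_. l) - w"
  have u: "u i = (if i = 0 then l else 0) - w i" for i by (simp add: u_def ev_apply)
  have un: "n \<le> i \<Longrightarrow> u i = 0" for i using w0 n by (simp add: u)
  define c where "c = (\<Sum>k<n. (norm (u k))^2)"
  define r :: quat where "r = of_real (2 / c)"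
  have rc: "qcnj r = r" by (simp only: r_def qcnj_of_real)
  define al where "al j = r * qcnj (u j)" for j
  define k1 where "k1 i j = (if i \<le> n \<and> j \<le> n then (if j < n then ev j i - u i * al j else ev n i * (q * qcnj l)) else 0)" for i j
  have juu: "jip n u u = of_real c" by (simp add: jip_self c_def un)
  have colj: "col k1 j = ev j - vsc u (al j)" if "j < n" for j
    using that by (auto simp: col_def k1_def vsc_def ev_apply un intro!: ext)
  have coln: "col k1 n = vsc (ev n) (q * qcnj l)"
    by (auto simp: col_def k1_def vsc_def ev_apply intro!: ext)
  have Sp: "k1 \<in> Sp n"
  proof (rule Sp_cols)
    show "is_mat n k1" by (simp add: is_mat_def k1_def)
  next
    fix i j assume i: "i \<le> n" and j: "j \<le> n"
    show "jip n (col k1 i) (col k1 j) = Jform n i j"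
    proof (cases "i < n")
      case ilt: True
      show ?thesis
      proof (cases "j < n")
        case jlt: True
        have "jip n (col k1 i) (col k1 j) = jip n (ev i) (ev j) - jip n (ev i) u * al j
              - qcnj (al i) * jip n u (ev j) + qcnj (al i) * jip n u u * al j"
          using ilt jlt by (simp add: colj jip_diff_left jip_diff_right jip_vsc_left jip_vsc_right
              algebra_simps mult.assoc)
        also have "\<dots> = (if i = j then 1 else 0) - u i * (r * qcnj (u j)) - (u i * r) * qcnj (u j)
              + (u i * r) * of_real c * (r * qcnj (u j))"
          using ilt jlt by (simp add: jip_ev_left jip_ev_right juu al_def qcnj_mult rc jdiag_def ev_apply mult.assoc)
        also have "\<dots> = (if i = j then 1 else 0) + u i * (r * of_real c * r - 2 * r) * qcnj (u j)"
          by (simp add: algebra_simps) (simp add: mult_2 distrib_left)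
        also have "r * of_real c * r - 2 * r = 0"
        proof -
          have "r * of_real c * r - 2 * r = of_real (2/c * c * (2/c) - 2 * (2/c))"
            by (simp only: r_def of_real_mult of_real_diff of_real_numeral)
          also have "\<dots> = 0" by (cases "c = 0") simp_all
          finally show ?thesis .
        qed
        finally show ?thesis using ilt jlt by (simp add: Jform_def)
      next
        case False
        then have "j = n" using j by simp
        then show ?thesis using ilt
          by (simp add: colj coln jip_vsc_right jip_ev_right ev_apply un Jform_def vsc_apply fun_diff_apply)
      qed
    next
      case False
      then have iN: "i = n" using i by simp
      show ?thesis
      proof (cases "j < n")
        case jlt: True
        then show ?thesis using iN
          by (simp add: colj coln jip_vsc_left jip_ev_left ev_apply un Jform_def vsc_apply fun_diff_apply)
      next
        case False
        then have "j = n" using j by simp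
        moreover have "qcnj (q * qcnj l) * (q * qcnj l) = 1"
          using q l1 by (simp add: cnj_mult_norm norm_mult)
        ultimately show ?thesis using iN
          by (simp add: coln jip_vsc_left jip_vsc_right jip_ev_left ev_apply Jform_def jdiag_def)
      qed
    qed
  qed
  have K: "k1 \<in> Kgrp n"
    by (rule K_from_col[OF Sp]) (simp add: k1_def ev_apply)
  have c0: "(\<Sum>k<n. (norm (w k))^2) = (norm (w 0))^2 + (\<Sum>k\<in>{1..<n}. (norm (w k))^2)"
    using n by (simp add: atLeast0LessThan[symmetric] sum.atLeast_Suc_lessThan)
  have cu: "c = (norm (l - w 0))^2 + (\<Sum>k\<in>{1..<n}. (norm (w k))^2)"
    using n by (simp add: c_def u atLeast0LessThan[symmetric] sum.atLeast_Suc_lessThan)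
  have lw2: "l - w 0 = l * of_real (1 - norm (w 0))"
  proof -
    have "l - w 0 = l - l * of_real (norm (w 0))" using arg_cong[OF wl, of "\<lambda>x. l - x"] .
    also have "\<dots> = l * of_real (1 - norm (w 0))" by (simp add: algebra_simps)
    finally show ?thesis .
  qed
  have nw0: "norm (w 0) \<le> 1"
  proof -
    have "(norm (w 0))^2 \<le> 1" using c0 w1 by (smt (verit) sum_nonneg zero_le_power2)
    then show ?thesis by (simp add: abs_square_le_1)
  qed
  have nl: "norm (l - w 0) = 1 - norm (w 0)"
  proof -
    have "norm (l - w 0) = norm (l * of_real (1 - norm (w 0)))" by (simp only: lw2)
    also have "\<dots> = 1 - norm (w 0)" using l1 nw0 by (simp only: norm_mult norm_of_real) simp
    finally show ?thesis .
  qed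
  have cval: "c = 2 * (1 - norm (w 0))"
  proof -
    have "(norm (l - w 0))^2 = (1 - norm (w 0))^2" using nl by simp
    then have "c = (1 - norm (w 0))^2 + (1 - (norm (w 0))^2)" using cu c0 w1 by linarith
    also have "\<dots> = 2 * (1 - norm (w 0))" by (simp add: power2_eq_square algebra_simps)
    finally show ?thesis .
  qed
  have col0: "k1 i 0 * l = w i" if "i < n" for i
  proof (cases "c = 0")
    case True
    then have nw: "norm (w 0) = 1" using cval by simp
    then have "(\<Sum>k\<in>{1..<n}. (norm (w k))^2) = 0" using c0 w1 by simp
    then have "\<forall>k\<in>{1..<n}. (norm (w k))^2 = 0" by (subst sum_nonneg_eq_0_iff[symmetric]) auto
    then have wk: "w k = 0" if "0 < k" "k < n" for k using that by auto
    have "w 0 = l" using wl nw by simp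
    then show ?thesis using that True n wk[of i]
      by (simp add: k1_def al_def r_def ev_apply)
  next
    case False
    have "al 0 * l = r * (qcnj l * l - qcnj (w 0) * l)"
      using n by (simp add: al_def u qcnj_diff algebra_simps mult.assoc)
    also have "\<dots> = of_real (2 / c * (1 - norm (w 0)))"
      by (simp only: ll lw r_def of_real_mult of_real_diff of_real_1)
    also have "\<dots> = 1" using False cval by simp
    finally have a0: "al 0 * l = 1" .
    have "k1 i 0 * l = ev 0 i * l - u i * (al 0 * l)"
      using that n by (simp add: k1_def algebra_simps mult.assoc)
    then show ?thesis using a0 by (simp add: u ev_apply)
  qed
  have "k1 n n * l = q * (qcnj l * l)" by (simp add: k1_def ev_apply mult.assoc)
  then have "k1 n n * l = q" by (simp add: ll)
  then show ?thesis using K l1 col0 by blast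
qed


lemma norm_div_real [simp]: "norm (a / (of_real r :: quat)) = norm a / \<bar>r\<bar>"
  by (simp add: divide_inverse norm_mult norm_inverse of_real_inverse[symmetric] del: of_real_inverse)

lemma div_real_mult [simp]: "r \<noteq> 0 \<Longrightarrow> a / (of_real r :: quat) * of_real r = a"
  by (simp add: divide_inverse mult.assoc)

lemma cartan_nn: assumes n: "0 < n" and k1: "k1 \<in> Kgrp n" and k2: "k2 \<in> Kgrp n"
  shows "mmul n (mmul n k1 (expH n T)) k2 n n = k1 n n * of_real (cosh T) * k2 n n"
proof -
  have "mmul n (mmul n k1 (expH n T)) k2 n n = (\<Sum>l<n. mmul n k1 (expH n T) n l * k2 l n) + mmul n k1 (expH n T) n n * k2 n n"
    by (simp add: mmul_def sum_atMost_split[of _ n])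
  also have "(\<Sum>l<n. mmul n k1 (expH n T) n l * k2 l n) = 0"
    using K_entries[OF k2] by simp
  also have "mmul n k1 (expH n T) n n = k1 n n * of_real (cosh T)"
    using n K_entries[OF k1 n] by (simp add: mmul_expH_right)
  finally show ?thesis by simp
qed

lemma cartan_norm: assumes n: "0 < n" and k1: "k1 \<in> Kgrp n" and k2: "k2 \<in> Kgrp n"
  shows "norm (mmul n (mmul n k1 (expH n T)) k2 n n) = cosh T"
  by (simp add: cartan_nn[OF assms] norm_mult K_norm[OF k1] K_norm[OF k2])

lemma cartan_eq: assumes n: "0 < n" and T: "0 \<le> T" and k1: "k1 \<in> Kgrp n" and k2: "k2 \<in> Kgrp n"
    and x: "x = mmul n (mmul n k1 (expH n T)) k2"
  shows "cartan n x = T"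
  unfolding cartan_def
proof (rule the_equality)
  show "0 \<le> T \<and> (\<exists>k1\<in>Kgrp n. \<exists>k2\<in>Kgrp n. x = mmul n (mmul n k1 (expH n T)) k2)"
    using T k1 k2 x by blast
next
  fix t assume "0 \<le> t \<and> (\<exists>k1\<in>Kgrp n. \<exists>k2\<in>Kgrp n. x = mmul n (mmul n k1 (expH n t)) k2)"
  then obtain k1' k2' where t: "0 \<le> t" and k1': "k1' \<in> Kgrp n" and k2': "k2' \<in> Kgrp n"
    and x': "x = mmul n (mmul n k1' (expH n t)) k2'" by blast
  have "cosh t = cosh T"
    using cartan_norm[OF n k1' k2', of t] cartan_norm[OF n k1 k2, of T] x x' by simp
  then show "t = T" using t T by (metis arcosh_cosh_real)
qed

lemma mid_K: "mid n \<in> Kgrp n"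
  by (rule K_from_col[OF mid_Sp]) (simp add: mid_def)

lemma cartan_exists: assumes n: "0 < n" and x: "x \<in> Sp n"
  shows "\<exists>T k1 k2. 0 \<le> T \<and> k1 \<in> Kgrp n \<and> k2 \<in> Kgrp n \<and> x = mmul n (mmul n k1 (expH n T)) k2"
proof -
  have xm: "is_mat n x" using x by (rule Sp_is_mat)
  define B2 where "B2 = (\<Sum>k<n. (norm (x k n))^2)"
  define d where "d = x n n"
  have "jip n (col x n) (col x n) = -1" using Sp_cols_eq[OF x, of n n] by (simp add: Jform_def)
  then have "of_real (B2 - (norm d)^2) = (of_real (-1) :: quat)"
    by (simp add: jip_self col_def B2_def d_def)
  then have Bd: "B2 - (norm d)^2 = -1" using of_real_eq_iff by blast
  have B2nn: "0 \<le> B2" by (simp add: B2_def sum_nonneg)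
  show ?thesis
  proof (cases "B2 = 0")
    case True
    then have "\<forall>k\<in>{..<n}. (norm (x k n))^2 = 0" unfolding B2_def by (subst sum_nonneg_eq_0_iff[symmetric]) auto
    then have "\<And>i. i < n \<Longrightarrow> x i n = 0" by simp
    then have xK: "x \<in> Kgrp n" by (rule K_from_col[OF x])
    have "x = mmul n (mmul n x (expH n 0)) (mid n)" by (simp add: expH_zero mmul_mid_right xm)
    then show ?thesis using xK mid_K by blast
  next
    case False
    then have Bpos: "0 < B2" using B2nn by simp
    define B where "B = sqrt B2"
    have Bp: "0 < B" using Bpos by (simp add: B_def)
    have BB: "B * B = B2" using B2nn by (simp add: B_def)
    define D where "D = norm d"
    have DD: "D * D = 1 + B2" using Bd by (simp add: D_def power2_eq_square)
    have Dp: "0 < D"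
    proof -
      have "D \<ge> 0" by (simp add: D_def)
      moreover have "D \<noteq> 0" using DD Bpos by auto
      ultimately show ?thesis by simp
    qed
    define w where "w i = (if i < n then x i n * of_real (1 / B) else 0)" for i
    have w0: "\<And>i. n \<le> i \<Longrightarrow> w i = 0" by (simp add: w_def)
    have w1: "(\<Sum>k<n. (norm (w k))^2) = 1"
    proof -
      have "(\<Sum>k<n. (norm (w k))^2) = (\<Sum>k<n. (norm (x k n))^2 * (1 / B2))"
        using Bp by (intro sum.cong) (simp_all add: w_def norm_mult power_mult_distrib BB[symmetric] power2_eq_square)
      also have "\<dots> = 1" using Bpos by (simp add: sum_divide_distrib[symmetric] B2_def)
      finally show ?thesis .
    qed
    define q where "q = d * of_real (1 / D)"
    have q: "norm q = 1" using Dp by (simp add: q_def norm_mult D_def)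
    obtain k1 l where k1: "k1 \<in> Kgrp n" and l1: "norm l = 1" and k10: "\<forall>i<n. k1 i 0 * l = w i"
      and k1n: "k1 n n * l = q"
      using refl_exists[OF n w0 w1 q] by blast
    define T where "T = ln (D + B)"
    have DB: "(D + B) * (D - B) = 1" using DD BB by (simp add: algebra_simps)
    have DBp: "0 < D + B" using Dp Bp by simp
    have invDB: "inverse (D + B) = D - B" using DB DBp by (simp add: field_simps)
    have coshT: "cosh T = D" using DBp by (simp add: T_def cosh_ln_real invDB)
    have sinhT: "sinh T = B" using DBp by (simp add: T_def sinh_ln_real invDB)
    have T0: "0 \<le> T"
    proof -
      have "1 \<le> D" using DD Bpos Dp by (smt (verit) mult_le_cancel_left1)
      then show ?thesis using Bp by (simp add: T_def)
    qed
    define z :: "nat \<Rightarrow> quat" where "z i = (if i = 0 then of_real B * l else if i = n then of_real D * l else 0)" for i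
    have zv: "is_vec n z" using n by (simp add: is_vec_def z_def)
    have colx: "col x n = mv n k1 z"
    proof (rule ext)
      fix i show "col x n i = mv n k1 z i"
      proof (cases "i \<le> n")
        case True
        then have "mv n k1 z i = k1 i 0 * z 0 + k1 i n * z n"
          using n by (simp add: mv_def sum_two[OF n] z_def)
        also have "\<dots> = col x n i"
        proof (cases "i < n")
          case True
          then have "k1 i 0 * z 0 + k1 i n * z n = (k1 i 0 * l) * of_real B"
            using K_entries[OF k1 True] n by (simp add: z_def mult.assoc of_real_comm)
          also have "\<dots> = x i n * of_real (1 / B * B)" using True k10 by (simp add: w_def mult.assoc)
          finally show ?thesis using Bp by (simp add: col_def)
        next
          case False
          then have iN: "i = n" using \<open>i \<le> n\<close> by simp
          have "k1 i 0 * z 0 + k1 i n * z n = (k1 n n * l) * of_real D"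
            using K_entries[OF k1 n] n iN by (simp add: z_def mult.assoc of_real_comm)
          also have "\<dots> = d * of_real (1 / D * D)" using k1n by (simp add: q_def mult.assoc)
          finally show ?thesis using Dp iN by (simp add: col_def d_def)
        qed
        finally show ?thesis ..
      next
        case False
        then show ?thesis using xm by (simp add: col_def mv_def is_mat_def)
      qed
    qed
    define k2 where "k2 = mmul n (expH n (- T)) (mmul n (ginv n k1) x)"
    have k1S: "k1 \<in> Sp n" using k1 by (rule K_Sp)
    have k2S: "k2 \<in> Sp n"
      unfolding k2_def by (intro Sp_mmul expH_Sp ginv_Sp n k1S x)
    have colk2: "col k2 n = mv n (expH n (- T)) z"
    proof -
      have "col k2 n = mv n k2 (ev n)" using k2S by (simp add: mv_ev Sp_is_mat)
      also have "\<dots> = mv n (expH n (- T)) (mv n (mmul n (ginv n k1) k1) z)"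
        by (simp add: k2_def mv_mmul mv_ev xm colx)
      also have "\<dots> = mv n (expH n (- T)) z" by (simp add: ginv_left[OF k1S] mv_mid[OF zv])
      finally show ?thesis .
    qed
    have k2K: "k2 \<in> Kgrp n"
    proof (rule K_from_col[OF k2S])
      fix i assume i: "i < n"
      have "k2 i n = mv n (expH n (- T)) z i" using colk2 by (metis col_def)
      also have "\<dots> = 0"
      proof (cases "i = 0")
        case True
        have "of_real (cosh T) * (of_real B * l) + - (of_real (sinh T) * (of_real D * l)) = (0::quat)"
          by (simp add: coshT sinhT mult.assoc[symmetric] flip: of_real_mult)
        then show ?thesis using True n by (simp add: mv_expH z_def)
      next
        case False
        then show ?thesis using i n by (simp add: mv_expH z_def)
      qed
      finally show "k2 i n = 0" .
    qed
    have "mmul n (mmul n k1 (expH n T)) k2 = mmul n k1 (mmul n (mmul n (expH n T) (expH n (- T))) (mmul n (ginv n k1) x))"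
      by (simp add: k2_def mmul_assoc)
    also have "\<dots> = x"
      using n xm by (simp add: expH_add expH_zero mmul_mid_left mmul_assoc[symmetric] ginv_right[OF k1S])
    finally show ?thesis using T0 k1 k2K by metis
  qed
qed




lemma of_real_comps [simp]:
  "qre (of_real r) = r" "qi (of_real r) = 0" "qj (of_real r) = 0" "qk (of_real r) = 0"
  by (simp_all add: of_real_def)

lemma numeral_comps [simp]:
  "qre (numeral w) = numeral w" "qi (numeral w) = 0" "qj (numeral w) = 0" "qk (numeral w) = 0"
  using of_real_comps[of "numeral w"] by (simp_all only: of_real_numeral)

lemma corner00:
  fixes ch sh :: real and a :: quat
  assumes c: "ch * ch - sh * sh = 1"
  shows "(of_real ch * a + of_real (- sh) * (a - 1)) * of_real ch + (of_real ch * (1 - a) + of_real (- sh) * (2 - a)) * of_real sh - 1 = of_real ((ch - sh)^2) * (a - 1)"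
proof -
  have c': "ch * ch = 1 + sh * sh" using c by linarith
  have cc: "ch * (ch * x) = x + sh * (sh * x)" for x
  proof -
    have "ch * (ch * x) = (ch * ch) * x" by (simp only: mult.assoc)
    also have "\<dots> = (1 + sh * sh) * x" by (simp only: c')
    also have "\<dots> = x + sh * (sh * x)" by (simp add: algebra_simps)
    finally show ?thesis .
  qed
  show ?thesis using c' by (simp add: quat_eq_iff algebra_simps power2_eq_square cc)
qed

lemma corner0n:
  fixes ch sh :: real and a :: quat
  assumes c: "ch * ch - sh * sh = 1"
  shows "(of_real ch * a + of_real (- sh) * (a - 1)) * of_real sh + (of_real ch * (1 - a) + of_real (- sh) * (2 - a)) * of_real ch - 0 = of_real ((ch - sh)^2) * (1 - a)"
proof -
  have c': "ch * ch = 1 + sh * sh" using c by linarith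
  have cc: "ch * (ch * x) = x + sh * (sh * x)" for x
  proof -
    have "ch * (ch * x) = (ch * ch) * x" by (simp only: mult.assoc)
    also have "\<dots> = (1 + sh * sh) * x" by (simp only: c')
    also have "\<dots> = x + sh * (sh * x)" by (simp add: algebra_simps)
    finally show ?thesis .
  qed
  show ?thesis using c' by (simp add: quat_eq_iff algebra_simps power2_eq_square cc)
qed

lemma cornern0:
  fixes ch sh :: real and a :: quat
  assumes c: "ch * ch - sh * sh = 1"
  shows "(of_real (- sh) * a + of_real ch * (a - 1)) * of_real ch + (of_real (- sh) * (1 - a) + of_real ch * (2 - a)) * of_real sh - 0 = of_real ((ch - sh)^2) * (a - 1)"
proof -
  have c': "ch * ch = 1 + sh * sh" using c by linarith
  have cc: "ch * (ch * x) = x + sh * (sh * x)" for x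
  proof -
    have "ch * (ch * x) = (ch * ch) * x" by (simp only: mult.assoc)
    also have "\<dots> = (1 + sh * sh) * x" by (simp only: c')
    also have "\<dots> = x + sh * (sh * x)" by (simp add: algebra_simps)
    finally show ?thesis .
  qed
  show ?thesis using c' by (simp add: quat_eq_iff algebra_simps power2_eq_square cc)
qed

lemma cornernn:
  fixes ch sh :: real and a :: quat
  assumes c: "ch * ch - sh * sh = 1"
  shows "(of_real (- sh) * a + of_real ch * (a - 1)) * of_real sh + (of_real (- sh) * (1 - a) + of_real ch * (2 - a)) * of_real ch - 1 = of_real ((ch - sh)^2) * (1 - a)"
proof -
  have c': "ch * ch = 1 + sh * sh" using c by linarith
  have cc: "ch * (ch * x) = x + sh * (sh * x)" for x
  proof -
    have "ch * (ch * x) = (ch * ch) * x" by (simp only: mult.assoc)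
    also have "\<dots> = (1 + sh * sh) * x" by (simp only: c')
    also have "\<dots> = x + sh * (sh * x)" by (simp add: algebra_simps)
    finally show ?thesis .
  qed
  show ?thesis using c' by (simp add: quat_eq_iff algebra_simps power2_eq_square cc)
qed

lemma nb1: "0 \<le> t \<Longrightarrow> norm X \<le> K \<Longrightarrow> norm (of_real (exp (- t)) * (X::quat)) \<le> exp (- t) * K"
  by (simp add: norm_mult mult_left_mono)
lemma nb2: assumes "0 \<le> t" "norm X \<le> K" shows "norm (of_real ((exp (- t))^2) * (X::quat)) \<le> exp (- t) * K"
proof -
  have "norm (of_real ((exp (- t))^2) * X) = exp (- t) * (exp (- t) * norm X)" by (simp add: norm_mult power2_eq_square)
  also have "\<dots> \<le> exp (- t) * K"
  proof (rule mult_left_mono)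
    have "exp (- t) * norm X \<le> 1 * norm X" using assms(1) by (intro mult_right_mono) auto
    then show "exp (- t) * norm X \<le> K" using assms(2) by simp
  qed simp
  finally show ?thesis .
qed

lemma sum_sq_le_sq_sum: fixes f :: "'a \<Rightarrow> real"
  assumes "finite A" "\<And>a. a \<in> A \<Longrightarrow> 0 \<le> f a"
  shows "(\<Sum>a\<in>A. (f a)^2) \<le> (\<Sum>a\<in>A. f a)^2"
  using assms
proof (induction A rule: finite_induct)
  case (insert x F)
  have "0 \<le> sum f F" using insert by (simp add: sum_nonneg)
  then have "0 \<le> 2 * f x * sum f F" using insert by simp
  then show ?case using insert by (simp add: power2_sum)
qed simp

lemma mnorm_le_sum: "mnorm n A \<le> (\<Sum>i\<le>n. \<Sum>j\<le>n. norm (A i j))"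
proof -
  have "(\<Sum>i\<le>n. \<Sum>j\<le>n. (qnorm (A i j))^2) \<le> (\<Sum>i\<le>n. (\<Sum>j\<le>n. norm (A i j))^2)"
    unfolding qnorm_norm by (rule sum_mono, rule sum_sq_le_sq_sum) auto
  also have "\<dots> \<le> (\<Sum>i\<le>n. \<Sum>j\<le>n. norm (A i j))^2"
    by (intro sum_sq_le_sq_sum) (simp_all add: sum_nonneg)
  finally have "sqrt (\<Sum>i\<le>n. \<Sum>j\<le>n. (qnorm (A i j))^2) \<le> sqrt ((\<Sum>i\<le>n. \<Sum>j\<le>n. norm (A i j))^2)"
    by (rule real_sqrt_le_mono)
  then show ?thesis by (simp add: mnorm_def sum_nonneg)
qed

lemma entry_le_mnorm: assumes "i \<le> n" "j \<le> n" shows "norm (A i j) \<le> mnorm n A"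
proof -
  have "(norm (A i j))^2 \<le> (\<Sum>j\<le>n. (qnorm (A i j))^2)"
    unfolding qnorm_norm using assms by (intro member_le_sum) auto
  also have "\<dots> \<le> (\<Sum>i\<le>n. \<Sum>j\<le>n. (qnorm (A i j))^2)"
    using assms by (intro member_le_sum[where f="\<lambda>i. \<Sum>j\<le>n. (qnorm (A i j))^2"]) (simp_all add: sum_nonneg)
  finally have "sqrt ((norm (A i j))^2) \<le> mnorm n A" unfolding mnorm_def by (rule real_sqrt_le_mono)
  then show ?thesis by simp
qed

lemma N_crit:
  assumes n: "0 < n" and mS: "m \<in> Sp n"
    and h1: "m 0 n = 1 - m 0 0" and h2: "m n 0 = m 0 0 - 1" and h3: "m n n = 2 - m 0 0"
    and h4: "\<And>i. 0 < i \<Longrightarrow> i < n \<Longrightarrow> m i n = - m i 0"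
    and h5: "\<And>j. 0 < j \<Longrightarrow> j < n \<Longrightarrow> m n j = m 0 j"
    and h6: "\<And>i j. 0 < i \<Longrightarrow> i < n \<Longrightarrow> 0 < j \<Longrightarrow> j < n \<Longrightarrow> m i j = (if i = j then 1 else 0)"
  shows "m \<in> Ngrp n"
proof -
  define a where "a = m 0 0"
  define Kc where "Kc = norm (a - 1) + (\<Sum>i\<le>n. \<Sum>j\<le>n. norm (m i j))"
  have Kc_ge: "norm (m i j) \<le> Kc" if "i \<le> n" "j \<le> n" for i j
  proof -
    have "norm (m i j) \<le> (\<Sum>j\<le>n. norm (m i j))" using that by (intro member_le_sum) auto
    also have "\<dots> \<le> (\<Sum>i\<le>n. \<Sum>j\<le>n. norm (m i j))"
      using that by (intro member_le_sum[where f="\<lambda>i. \<Sum>j\<le>n. norm (m i j)"]) (simp_all add: sum_nonneg)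
    finally have "norm (m i j) \<le> (\<Sum>i\<le>n. \<Sum>j\<le>n. norm (m i j))" .
    then show ?thesis unfolding Kc_def using norm_ge_zero[of "a - 1"] by linarith
  qed
  have Kc_a: "norm (a - 1) \<le> Kc" by (simp add: Kc_def sum_nonneg)
  have Kc_a': "norm (1 - a) \<le> Kc" using Kc_a by (simp add: norm_minus_commute)
  define D where "D t = mdiff (mmul n (mmul n (expH n (- t)) m) (expH n t)) (mid n)" for t
  have bound: "norm (D t i j) \<le> exp (- t) * Kc" if t: "0 \<le> t" and i: "i \<le> n" and j: "j \<le> n" for t i j
  proof -
    define ch where "ch = cosh t"
    define sh where "sh = sinh t"
    have e: "ch - sh = exp (- t)" by (simp add: ch_def sh_def cosh_minus_sinh)
    have c': "ch * ch = 1 + sh * sh" using cosh_square_eq[of t] by (simp add: ch_def sh_def power2_eq_square)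
    have cc: "ch * (ch * x) = x + sh * (sh * x)" for x
    proof -
      have "ch * (ch * x) = (ch * ch) * x" by (simp only: mult.assoc)
      also have "\<dots> = (1 + sh * sh) * x" by (simp only: c')
      also have "\<dots> = x + sh * (sh * x)" by (simp add: algebra_simps)
      finally show ?thesis .
    qed
    have e0: "0 \<le> exp (- t)" by simp
    have e1: "exp (- t) \<le> 1" using t by simp
    have e2: "(exp (- t))^2 \<le> exp (- t)" using e0 e1 by (simp add: power2_eq_square mult_le_cancel_right1)
    define Y where "Y i j = (if i = 0 then of_real ch * m 0 j + of_real (- sh) * m n j
        else if i = n then of_real (- sh) * m 0 j + of_real ch * m n j else m i j)" for i j
    have Yf: "mmul n (expH n (- t)) m i j = Y i j" if "i \<le> n" "j \<le> n" for i j
      using that n by (simp add: mmul_expH_left Y_def ch_def sh_def)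
    have Mf: "D t i j = (if j = 0 then Y i 0 * of_real ch + Y i n * of_real sh
        else if j = n then Y i 0 * of_real sh + Y i n * of_real ch else Y i j) - mid n i j"
      using i j n by (simp add: D_def mdiff_def mmul_expH_right Yf ch_def sh_def)
    have mid0: "mid n i j = (if i = j then 1 else 0)" using i j by (simp add: mid_def)
    consider "i = 0" | "i = n" | "0 < i \<and> i < n" using i n by linarith
    then show ?thesis
    proof cases
      case 1
      consider "j = 0" | "j = n" | "0 < j \<and> j < n" using j n by linarith
      then show ?thesis
      proof cases
        case 1
        have "D t i j = (of_real ch * a + of_real (- sh) * (a - 1)) * of_real ch + (of_real ch * (1 - a) + of_real (- sh) * (2 - a)) * of_real sh - 1"
          using \<open>i = 0\<close> 1 n unfolding Mf mid0 by (simp add: Y_def h1 h2 h3 a_def[symmetric])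
        also have "\<dots> = of_real ((ch - sh)^2) * (a - 1)" using c' by (intro corner00) simp
        finally show ?thesis using nb2[OF t Kc_a] e by simp
      next
        case 2
        have "D t i j = (of_real ch * a + of_real (- sh) * (a - 1)) * of_real sh + (of_real ch * (1 - a) + of_real (- sh) * (2 - a)) * of_real ch - 0"
          using \<open>i = 0\<close> 2 n unfolding Mf mid0 by (simp add: Y_def h1 h2 h3 a_def[symmetric])
        also have "\<dots> = of_real ((ch - sh)^2) * (1 - a)" using c' by (intro corner0n) simp
        finally show ?thesis using nb2[OF t Kc_a'] e by simp
      next
        case 3
        have "D t i j = of_real (ch - sh) * m 0 j"
          using \<open>i = 0\<close> 3 n unfolding Mf mid0
          by (simp add: Y_def h5 algebra_simps) (simp add: of_real_comm algebra_simps)?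
        then show ?thesis using e nb1[OF t Kc_ge[of 0 j]] 3 by simp
      qed
    next
      case 2
      consider "j = 0" | "j = n" | "0 < j \<and> j < n" using j n by linarith
      then show ?thesis
      proof cases
        case 1
        have "D t i j = (of_real (- sh) * a + of_real ch * (a - 1)) * of_real ch + (of_real (- sh) * (1 - a) + of_real ch * (2 - a)) * of_real sh - 0"
          using \<open>i = n\<close> 1 n unfolding Mf mid0 by (simp add: Y_def h1 h2 h3 a_def[symmetric])
        also have "\<dots> = of_real ((ch - sh)^2) * (a - 1)" using c' by (intro cornern0) simp
        finally show ?thesis using nb2[OF t Kc_a] e by simp
      next
        case 2
        have "D t i j = (of_real (- sh) * a + of_real ch * (a - 1)) * of_real sh + (of_real (- sh) * (1 - a) + of_real ch * (2 - a)) * of_real ch - 1"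
          using \<open>i = n\<close> 2 n unfolding Mf mid0 by (simp add: Y_def h1 h2 h3 a_def[symmetric])
        also have "\<dots> = of_real ((ch - sh)^2) * (1 - a)" using c' by (intro cornernn) simp
        finally show ?thesis using nb2[OF t Kc_a'] e by simp
      next
        case 3
        have "D t i j = of_real (ch - sh) * m 0 j"
          using \<open>i = n\<close> 3 n unfolding Mf mid0
          by (simp add: Y_def h5 algebra_simps) (simp add: of_real_comm algebra_simps)?
        then show ?thesis using e nb1[OF t Kc_ge[of 0 j]] 3 by simp
      qed
    next
      case 3
      consider "j = 0" | "j = n" | "0 < j \<and> j < n" using j n by linarith
      then show ?thesis
      proof cases
        case 1
        have "D t i j = of_real (ch - sh) * m i 0"
          using 3 1 n unfolding Mf mid0
          by (simp add: Y_def h4 algebra_simps) (simp add: of_real_comm algebra_simps)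
        then show ?thesis using e nb1[OF t Kc_ge[of i 0]] 3 by simp
      next
        case 2
        have "D t i j = of_real (ch - sh) * m i n"
          using 3 2 n unfolding Mf mid0
          by (simp add: Y_def h4 algebra_simps) (simp add: of_real_comm algebra_simps)
        then show ?thesis using e nb1[OF t Kc_ge[of i n]] 3 by simp
      next
        case 3
        have "D t i j = 0"
          using \<open>0 < i \<and> i < n\<close> 3 n unfolding Mf mid0
          by (simp add: Y_def h6)
        then show ?thesis using Kc_a by (simp add: order_trans[OF norm_ge_zero])
      qed
    qed
  qed
  have Kc0: "0 \<le> Kc" using Kc_a norm_ge_zero order_trans by blast
  have ev: "\<forall>\<^sub>F t in at_top. mnorm n (D t) \<le> (real (Suc n) * real (Suc n) * Kc) * exp (- t)"
  proof (rule eventually_at_top_linorderI[of 0])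
    fix t :: real assume t: "0 \<le> t"
    have "mnorm n (D t) \<le> (\<Sum>i\<le>n. \<Sum>j\<le>n. norm (D t i j))" by (rule mnorm_le_sum)
    also have "\<dots> \<le> (\<Sum>i\<le>n. \<Sum>j\<le>n. exp (- t) * Kc)"
      using bound[OF t] by (intro sum_mono) auto
    also have "\<dots> = (real (Suc n) * real (Suc n) * Kc) * exp (- t)" by simp
    finally show "mnorm n (D t) \<le> (real (Suc n) * real (Suc n) * Kc) * exp (- t)" .
  qed
  have lim0: "((\<lambda>t. (real (Suc n) * real (Suc n) * Kc) * exp (- t)) \<longlongrightarrow> 0) at_top"
    by (intro tendsto_mult_right_zero) (simp add: filterlim_compose[OF exp_at_bot filterlim_uminus_at_bot_at_top])
  have "((\<lambda>t. mnorm n (D t)) \<longlongrightarrow> 0) at_top"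
  proof (rule tendsto_sandwich[OF _ ev tendsto_const lim0])
    show "\<forall>\<^sub>F t in at_top. 0 \<le> mnorm n (D t)" by (simp add: mnorm_def sum_nonneg)
  qed
  then show ?thesis using mS by (simp add: Ngrp_def D_def)
qed




lemma fix1:
  fixes ch sh :: real and a b c d :: quat
  assumes cs: "ch * ch - sh * sh = 1"
  shows "(((of_real ch * a + of_real (- sh) * c) * of_real ch + (of_real ch * b + of_real (- sh) * d) * of_real sh) - 1) + (((of_real ch * a + of_real (- sh) * c) * of_real sh + (of_real ch * b + of_real (- sh) * d) * of_real ch) - 0) + (((of_real (- sh) * a + of_real ch * c) * of_real ch + (of_real (- sh) * b + of_real ch * d) * of_real sh) - 0) + (((of_real (- sh) * a + of_real ch * c) * of_real sh + (of_real (- sh) * b + of_real ch * d) * of_real ch) - 1) = (a + b) + (c + d) - 2"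
proof -
  have c': "ch * ch = 1 + sh * sh" using cs by linarith
  have cc: "ch * (ch * x) = x + sh * (sh * x)" for x
  proof -
    have "ch * (ch * x) = (ch * ch) * x" by (simp only: mult.assoc)
    also have "\<dots> = (1 + sh * sh) * x" by (simp only: c')
    also have "\<dots> = x + sh * (sh * x)" by (simp add: algebra_simps)
    finally show ?thesis .
  qed
  show ?thesis using c' by (simp add: quat_eq_iff algebra_simps power2_eq_square cc)
qed

lemma fix2:
  fixes ch sh :: real and a b c d :: quat
  assumes cs: "ch * ch - sh * sh = 1"
  shows "((((of_real ch * a + of_real (- sh) * c) * of_real ch + (of_real ch * b + of_real (- sh) * d) * of_real sh) - 1) + (((of_real ch * a + of_real (- sh) * c) * of_real sh + (of_real ch * b + of_real (- sh) * d) * of_real ch) - 0)) - ((((of_real (- sh) * a + of_real ch * c) * of_real ch + (of_real (- sh) * b + of_real ch * d) * of_real sh) - 0) + (((of_real (- sh) * a + of_real ch * c) * of_real sh + (of_real (- sh) * b + of_real ch * d) * of_real ch) - 1)) = of_real ((ch + sh)^2) * ((a + b) - (c + d))"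
proof -
  have c': "ch * ch = 1 + sh * sh" using cs by linarith
  have cc: "ch * (ch * x) = x + sh * (sh * x)" for x
  proof -
    have "ch * (ch * x) = (ch * ch) * x" by (simp only: mult.assoc)
    also have "\<dots> = (1 + sh * sh) * x" by (simp only: c')
    also have "\<dots> = x + sh * (sh * x)" by (simp add: algebra_simps)
    finally show ?thesis .
  qed
  show ?thesis using c' by (simp add: quat_eq_iff algebra_simps power2_eq_square cc)
qed

lemma N_fix:
  assumes n: "0 < n" and mN: "m \<in> Ngrp n"
  shows "m 0 0 + m 0 n = 1 \<and> m n 0 + m n n = 1"
proof -
  define D where "D t = mdiff (mmul n (mmul n (expH n (- t)) m) (expH n t)) (mid n)" for t
  have lim: "((\<lambda>t. mnorm n (D t)) \<longlongrightarrow> 0) at_top" using mN by (simp add: Ngrp_def D_def)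
  define a where "a = m 0 0"
  define b where "b = m 0 n"
  define c where "c = m n 0"
  define d where "d = m n n"
  have entries: "D t 0 0 + D t 0 n + D t n 0 + D t n n = (a + b) + (c + d) - 2 \<and>
     (D t 0 0 + D t 0 n) - (D t n 0 + D t n n) = of_real ((cosh t + sinh t)^2) * ((a + b) - (c + d))" for t
  proof -
    define ch where "ch = cosh t"
    define sh where "sh = sinh t"
    have cs: "ch * ch - sh * sh = 1" using cosh_square_eq[of t] by (simp add: ch_def sh_def power2_eq_square)
    define Y where "Y i j = (if i = 0 then of_real ch * m 0 j + of_real (- sh) * m n j
        else if i = n then of_real (- sh) * m 0 j + of_real ch * m n j else m i j)" for i j
    have Yf: "mmul n (expH n (- t)) m i j = Y i j" if "i \<le> n" "j \<le> n" for i j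
      using that n by (simp add: mmul_expH_left Y_def ch_def sh_def)
    have Mf: "D t i j = (if j = 0 then Y i 0 * of_real ch + Y i n * of_real sh
        else if j = n then Y i 0 * of_real sh + Y i n * of_real ch else Y i j) - mid n i j"
      if i: "i \<le> n" and j: "j \<le> n" for i j
      using i j n by (simp add: D_def mdiff_def mmul_expH_right Yf ch_def sh_def)
    have d00: "D t 0 0 = ((of_real ch * a + of_real (- sh) * c) * of_real ch + (of_real ch * b + of_real (- sh) * d) * of_real sh) - 1"
      using n by (simp add: Mf Y_def mid_def a_def b_def c_def d_def)
    have d0n: "D t 0 n = ((of_real ch * a + of_real (- sh) * c) * of_real sh + (of_real ch * b + of_real (- sh) * d) * of_real ch) - 0"
      using n by (simp add: Mf Y_def mid_def a_def b_def c_def d_def)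
    have dn0: "D t n 0 = ((of_real (- sh) * a + of_real ch * c) * of_real ch + (of_real (- sh) * b + of_real ch * d) * of_real sh) - 0"
      using n by (simp add: Mf Y_def mid_def a_def b_def c_def d_def)
    have dnn: "D t n n = ((of_real (- sh) * a + of_real ch * c) * of_real sh + (of_real (- sh) * b + of_real ch * d) * of_real ch) - 1"
      using n by (simp add: Mf Y_def mid_def a_def b_def c_def d_def)
    show ?thesis
      unfolding d00 d0n dn0 dnn using fix1[OF cs, of a c b d] fix2[OF cs, of a c b d]
      by (simp add: ch_def sh_def add.assoc)
  qed
  have le4: "norm (D t 0 0 + D t 0 n + D t n 0 + D t n n) \<le> 4 * mnorm n (D t)"
     "norm ((D t 0 0 + D t 0 n) - (D t n 0 + D t n n)) \<le> 4 * mnorm n (D t)" for t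
  proof -
    have b1: "norm (D t i j) \<le> mnorm n (D t)" if "i \<le> n" "j \<le> n" for i j
      using that by (rule entry_le_mnorm)
    have "norm (D t 0 0 + D t 0 n + D t n 0 + D t n n) \<le> norm (D t 0 0) + norm (D t 0 n) + norm (D t n 0) + norm (D t n n)"
      by (smt (verit) norm_triangle_ineq)
    then show "norm (D t 0 0 + D t 0 n + D t n 0 + D t n n) \<le> 4 * mnorm n (D t)"
      using b1[of 0 0] b1[of 0 n] b1[of n 0] b1[of n n] by simp
    have "norm ((D t 0 0 + D t 0 n) - (D t n 0 + D t n n)) \<le> norm (D t 0 0) + norm (D t 0 n) + norm (D t n 0) + norm (D t n n)"
      by (smt (verit) norm_triangle_ineq norm_triangle_ineq4)
    then show "norm ((D t 0 0 + D t 0 n) - (D t n 0 + D t n n)) \<le> 4 * mnorm n (D t)"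
      using b1[of 0 0] b1[of 0 n] b1[of n 0] b1[of n n] by simp
  qed
  have lim4: "((\<lambda>t. 4 * mnorm n (D t)) \<longlongrightarrow> 0) at_top"
    using tendsto_mult_right_zero[OF lim, of 4] by (simp add: mult.commute)
  have s1: "norm ((a + b) + (c + d) - 2) \<le> 0"
  proof (rule tendsto_le[OF _ lim4 tendsto_const])
    show "\<forall>\<^sub>F t in at_top. norm ((a + b) + (c + d) - 2) \<le> 4 * mnorm n (D t)"
      using le4(1) entries by (simp add: always_eventually)
  qed simp
  have s2: "norm ((a + b) - (c + d)) \<le> 0"
  proof (rule tendsto_le[OF _ lim4 tendsto_const])
    show "\<forall>\<^sub>F t in at_top. norm ((a + b) - (c + d)) \<le> 4 * mnorm n (D t)"
    proof (rule eventually_at_top_linorderI[of 0])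
      fix t :: real assume t: "0 \<le> t"
      have "1 \<le> (cosh t + sinh t)^2" using t by (simp add: cosh_plus_sinh)
      then have "norm ((a + b) - (c + d)) \<le> (cosh t + sinh t)^2 * norm ((a + b) - (c + d))"
        by (simp add: mult_le_cancel_right1)
      also have "\<dots> = norm (of_real ((cosh t + sinh t)^2) * ((a + b) - (c + d)))"
        by (simp only: norm_mult norm_of_real abs_power2)
      also have "\<dots> \<le> 4 * mnorm n (D t)" using le4(2)[of t] entries[of t] by simp
      finally show "norm ((a + b) - (c + d)) \<le> 4 * mnorm n (D t)" .
    qed
  qed simp
  have "(a + b) + (c + d) - 2 = 0" "(a + b) - (c + d) = 0" using s1 s2 by simp_all
  then have "a + b = 1 \<and> c + d = 1" by (simp add: quat_eq_iff)
  then show ?thesis by (simp add: a_def b_def c_def d_def)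
qed


definition vv :: "nat \<Rightarrow> nat \<Rightarrow> quat" where "vv n = ev 0 + ev n"

lemma vv_apply: "vv n i = (if i = 0 then 1 else 0) + (if i = n then 1 else 0)"
  by (simp add: vv_def ev_apply)

lemma is_vec_vv: "is_vec n (vv n)" by (simp add: is_vec_def vv_apply)

lemma mv_vv: assumes n: "0 < n" and i: "i \<le> n" shows "mv n A (vv n) i = A i 0 + A i n"
  using n i by (simp add: mv_def sum_two[OF n] vv_apply)

lemma iw_val: assumes n: "0 < n" and k: "k \<in> Kgrp n" and m: "m \<in> Ngrp n"
  shows "mv n (mmul n (mmul n k (expH n s)) m) (vv n) n = k n n * of_real (exp s)"
proof -
  have f: "m 0 0 + m 0 n = 1 \<and> m n 0 + m n n = 1" by (rule N_fix[OF n m])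
  define W where "W = mv n m (vv n)"
  have W0: "W 0 = 1" and Wn: "W n = 1" using f n by (simp_all add: W_def mv_vv)
  have "mv n (mmul n (mmul n k (expH n s)) m) (vv n) n = mv n k (mv n (expH n s) W) n"
    by (simp add: mv_mmul W_def)
  also have "\<dots> = (\<Sum>l<n. k n l * mv n (expH n s) W l) + k n n * mv n (expH n s) W n"
    by (simp add: mv_def sum_atMost_split[of _ n])
  also have "(\<Sum>l<n. k n l * mv n (expH n s) W l) = 0" using K_entries[OF k] by simp
  also have "mv n (expH n s) W n = of_real (exp s)"
    using n W0 Wn by (simp add: mv_expH flip: of_real_add cosh_plus_sinh)
  finally show ?thesis by simp
qed

lemma iwasawa_eq: assumes n: "0 < n" and k: "k \<in> Kgrp n" and m: "m \<in> Ngrp n"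
    and x: "x = mmul n (mmul n k (expH n s)) m"
  shows "iwasawa n x = s"
  unfolding iwasawa_def
proof (rule the_equality)
  show "\<exists>\<kappa>\<in>Kgrp n. \<exists>m\<in>Ngrp n. x = mmul n (mmul n \<kappa> (expH n s)) m" using k m x by blast
next
  fix s' assume "\<exists>\<kappa>\<in>Kgrp n. \<exists>m\<in>Ngrp n. x = mmul n (mmul n \<kappa> (expH n s')) m"
  then obtain k' m' where k': "k' \<in> Kgrp n" and m': "m' \<in> Ngrp n" and x': "x = mmul n (mmul n k' (expH n s')) m'"
    by blast
  have "exp s' = exp s"
    using arg_cong[OF iw_val[OF n k' m', of s', folded x'], of norm] arg_cong[OF iw_val[OF n k m, of s, folded x], of norm]
    by (simp add: norm_mult K_norm[OF k] K_norm[OF k'])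
  then show "s' = s" by simp
qed




lemma jip_vv_right: "0 < n \<Longrightarrow> jip n z (vv n) = qcnj (z 0) - qcnj (z n)"
  by (simp add: vv_def jip_add_right jip_ev_right jdiag_def)

lemma mv_expH_vv: assumes n: "0 < n" shows "mv n (expH n t) (vv n) = vsc (vv n) (of_real (exp t))"
proof (rule ext)
  fix i show "mv n (expH n t) (vv n) i = vsc (vv n) (of_real (exp t)) i"
    using n by (simp add: mv_expH vv_apply vsc_apply flip: of_real_add cosh_plus_sinh)
qed

lemma mv_expH_ev: assumes n: "0 < n" and j: "0 < j" "j < n" shows "mv n (expH n t) (ev j) = ev j"
proof (rule ext)
  fix i show "mv n (expH n t) (ev j) i = ev j i"
    using n j by (auto simp: mv_expH ev_apply)
qed

lemma qcnj_numeral [simp]: "qcnj (numeral w) = numeral w"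
  by (simp add: quat_eq_iff)

lemma mv_zero: "mv n M 0 = 0" by (simp add: mv_def fun_eq_iff)

lemma iw_exists: assumes n: "0 < n" and x: "x \<in> Sp n"
  shows "\<exists>k s m. k \<in> Kgrp n \<and> m \<in> Ngrp n \<and> x = mmul n (mmul n k (expH n s)) m"
proof -
  have xm: "is_mat n x" using x by (rule Sp_is_mat)
  define w where "w = mv n x (vv n)"
  have wv: "is_vec n w" by (simp add: w_def)
  have jvv: "jip n (vv n) (vv n) = 0" using n by (simp add: jip_vv_right vv_apply)
  have jww: "jip n w w = 0" using jvv by (simp add: w_def jip_mv[OF x])
  have sumw: "(\<Sum>k<n. (norm (w k))^2) = (norm (w n))^2"
  proof -
    have "of_real ((\<Sum>k<n. (norm (w k))^2) - (norm (w n))^2) = (of_real 0 :: quat)"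
      using jww by (simp add: jip_self)
    then show ?thesis using of_real_eq_iff by fastforce
  qed
  have wback: "mv n (ginv n x) w = vv n"
    by (simp add: w_def mv_mmul[symmetric] ginv_left[OF x] mv_mid is_vec_vv)
  have wn0: "w n \<noteq> 0"
  proof
    assume wn: "w n = 0"
    then have "(\<Sum>k<n. (norm (w k))^2) = 0" using sumw by simp
    then have "\<forall>k\<in>{..<n}. (norm (w k))^2 = 0" by (subst sum_nonneg_eq_0_iff[symmetric]) auto
    then have "w i = 0" for i using wn wv unfolding is_vec_def by (cases "i < n"; cases "i = n") auto
    then have "w = 0" by (simp add: fun_eq_iff)
    then have "vv n = 0" using wback by (simp add: mv_zero)
    then have "vv n 0 = 0" by simp
    then show False using n by (simp add: vv_apply)
  qed
  define N where "N = norm (w n)"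
  have Np: "0 < N" using wn0 by (simp add: N_def)
  define r :: quat where "r = of_real (1 / N)"
  have rc: "qcnj r = r" by (simp only: r_def qcnj_of_real)
  define cc where "cc j = inverse (w n) * x n j" for j
  define col0 where "col0 = vsc (w - vsc (ev n) (w n)) r"
  define qq where "qq = w n * r"
  have qq1: "norm qq = 1" using Np by (simp add: qq_def r_def norm_mult N_def)
  define coln where "coln = vsc (ev n) qq"
  define colj where "colj j = col x j - vsc w (cc j)" for j
  define k where "k i j = (if i \<le> n \<and> j \<le> n then (if j = 0 then col0 i else if j = n then coln i else colj j i) else 0)" for i j
  have col0_out: "col0 i = 0" if "n < i" for i using that wv by (simp add: col0_def vsc_apply fun_diff_apply ev_apply is_vec_def)
  have coln_out: "coln i = 0" if "n < i" for i using that by (simp add: coln_def vsc_apply ev_apply)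
  have colj_out: "colj j i = 0" if "n < i" "j \<le> n" for i j using that wv xm
    by (simp add: colj_def vsc_apply fun_diff_apply col_def is_vec_def is_mat_def)
  have col_k: "col k j = (if j = 0 then col0 else if j = n then coln else colj j)" if j: "j \<le> n" for j
  proof (rule ext)
    fix i show "col k j i = (if j = 0 then col0 else if j = n then coln else colj j) i"
      using j col0_out coln_out colj_out by (cases "i \<le> n") (auto simp: col_def k_def)
  qed
  have col0n: "col0 n = 0" by (simp add: col0_def vsc_apply fun_diff_apply ev_apply)
  have coljn: "colj j n = 0" for j using wn0 by (simp add: colj_def vsc_apply fun_diff_apply col_def cc_def mult.assoc[symmetric])
  have col0i: "col0 i = w i * r" if "i < n" for i using that by (simp add: col0_def vsc_apply fun_diff_apply ev_apply)
  have jwx: "jip n w (col x j) = 0" if "0 < j" "j < n" for j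
  proof -
    have "jip n w (col x j) = jip n (mv n x (vv n)) (mv n x (ev j))" using that xm by (simp add: w_def mv_ev)
    also have "\<dots> = jip n (vv n) (ev j)" by (rule jip_mv[OF x])
    also have "\<dots> = 0" using that by (simp add: jip_ev_right vv_apply)
    finally show ?thesis .
  qed
  have jxw: "jip n (col x j) w = 0" if "0 < j" "j < n" for j
    using jwx[OF that] jip_cnj[of n w "col x j"] by simp
  have J00: "jip n col0 col0 = 1"
  proof -
    have "(\<Sum>k<n. (norm (col0 k))^2) = (\<Sum>k<n. (norm (w k))^2 * (1 / N)^2)"
      using Np by (intro sum.cong) (simp_all add: col0i r_def norm_mult power_mult_distrib power_divide)
    also have "\<dots> = (\<Sum>k<n. (norm (w k))^2) * (1 / N)^2" by (simp only: sum_distrib_right)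
    also have "\<dots> = 1" using Np by (simp only: sumw N_def[symmetric]) (simp add: power_divide)
    finally show ?thesis by (simp add: jip_self col0n)
  qed
  have winv: "w n * (inverse (w n) * y) = y" for y by (simp add: mult.assoc[symmetric] right_inverse[OF wn0])
  have Jj0: "jip n col0 (colj j) = 0" if "0 < j" "j < n" for j
    using that jwx[OF that] jww
    by (simp add: col0_def colj_def jip_vsc_left jip_diff_left jip_diff_right jip_vsc_right jip_ev_left
        vsc_apply fun_diff_apply col_def cc_def wn0 mult.assoc winv jdiag_def)
  have J0n: "jip n col0 coln = 0"
    by (simp add: coln_def jip_vsc_right jip_ev_right col0n)
  have Jjk: "jip n (colj j) (colj l) = (if j = l then 1 else 0)" if "0 < j" "j < n" "0 < l" "l < n" for j l
  proof -
    have "jip n (colj j) (colj l) = jip n (col x j) (col x l)"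
      using that jwx jxw jww by (simp add: colj_def jip_diff_left jip_diff_right jip_vsc_left jip_vsc_right)
    also have "\<dots> = Jform n j l" using that by (intro Sp_cols_eq[OF x]) auto
    finally show ?thesis using that by (simp add: Jform_def)
  qed
  have Jjn: "jip n (colj j) coln = 0" for j
    by (simp add: coln_def jip_vsc_right jip_ev_right coljn)
  have Jnn: "jip n coln coln = -1"
    using qq1 by (simp add: coln_def jip_vsc_right jip_vsc_left jip_ev_right jdiag_def ev_apply cnj_mult_norm)
  have kS: "k \<in> Sp n"
  proof (rule Sp_cols)
    show "is_mat n k" by (simp add: is_mat_def k_def)
  next
    have le: "jip n (col k i) (col k j) = Jform n i j" if "i \<le> j" "j \<le> n" for i j
      using that J00 Jj0 J0n Jjk Jjn Jnn n by (auto simp: col_k Jform_def)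
    fix i j assume i: "i \<le> n" and j: "j \<le> n"
    show "jip n (col k i) (col k j) = Jform n i j"
    proof (cases "i \<le> j")
      case True then show ?thesis using le j by simp
    next
      case False
      then have "jip n (col k j) (col k i) = Jform n j i" using le i by simp
      then have "qcnj (jip n (col k j) (col k i)) = qcnj (Jform n j i)" by simp
      then show ?thesis using False by (auto simp: jip_cnj Jform_def)
    qed
  qed
  have kK: "k \<in> Kgrp n"
    by (rule K_from_col[OF kS]) (simp add: k_def coln_def vsc_apply ev_apply)
  have km: "is_mat n k" using kS by (rule Sp_is_mat)
  have kvv: "mv n k (vsc (vv n) (of_real N)) = w"
  proof (rule ext)
    fix i show "mv n k (vsc (vv n) (of_real N)) i = w i"
    proof (cases "i \<le> n")
      case True
      have "mv n k (vv n) i = col0 i + coln i" using True n by (simp add: mv_vv k_def)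
      also have "\<dots> = w i * r"
        by (simp add: col0_def coln_def qq_def vsc_apply fun_diff_apply algebra_simps mult.assoc)
      finally have "mv n k (vv n) i * of_real N = w i * of_real (1 / N * N)"
        by (simp add: r_def mult.assoc)
      then show ?thesis using Np by (simp add: mv_vsc vsc_apply)
    next
      case False
      then show ?thesis using wv by (simp add: mv_def is_vec_def)
    qed
  qed
  have kej: "mv n k (ev j) = colj j" if "0 < j" "j < n" for j
    using that by (simp add: mv_ev[OF _ km] col_k)
  define s where "s = ln N"
  have EvvN: "mv n (expH n (- s)) (vsc (vv n) (of_real N)) = vv n"
  proof -
    have "mv n (expH n (- s)) (vsc (vv n) (of_real N)) = vsc (vsc (vv n) (of_real (exp (- s)))) (of_real N)"
      using n by (simp add: mv_vsc mv_expH_vv)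
    also have "\<dots> = vv n" using Np by (simp add: s_def vsc_apply mult.assoc fun_eq_iff exp_minus flip: of_real_mult)
    finally show ?thesis .
  qed
  define m where "m = mmul n (expH n (- s)) (mmul n (ginv n k) x)"
  have mS: "m \<in> Sp n" unfolding m_def by (intro Sp_mmul expH_Sp ginv_Sp n kS x)
  have mm: "is_mat n m" using mS by (rule Sp_is_mat)
  have xeq: "x = mmul n (mmul n k (expH n s)) m"
  proof -
    have "mmul n (mmul n k (expH n s)) m = mmul n k (mmul n (mmul n (expH n s) (expH n (- s))) (mmul n (ginv n k) x))"
      by (simp add: m_def mmul_assoc)
    also have "\<dots> = x"
      using n xm by (simp add: expH_add expH_zero mmul_mid_left mmul_assoc[symmetric] ginv_right[OF kS])
    finally show ?thesis by simp
  qed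
  have cancel: "mv n (ginv n k) (mv n k z) = z" if "is_vec n z" for z
    using that by (simp add: mv_mmul[symmetric] ginv_left[OF kS] mv_mid)
  have isv: "is_vec n (vsc (vv n) (of_real N))" using is_vec_vv by (simp add: is_vec_def vsc_apply)
  have P1: "mv n m (vv n) = vv n"
  proof -
    have "mv n m (vv n) = mv n (expH n (- s)) (mv n (ginv n k) (mv n k (vsc (vv n) (of_real N))))"
      by (simp add: m_def mv_mmul kvv w_def)
    also have "\<dots> = vv n" by (simp add: cancel isv EvvN)
    finally show ?thesis .
  qed
  have P2: "mv n m (ev j) = ev j + vsc (vv n) (cc j)" if j: "0 < j" "j < n" for j
  proof -
    have "mv n x (ev j) = mv n k (ev j) + vsc (mv n k (vsc (vv n) (of_real N))) (cc j)"
      using j xm by (simp add: mv_ev kej kvv colj_def)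
    also have "\<dots> = mv n k (ev j + vsc (vsc (vv n) (of_real N)) (cc j))" by (simp add: mv_add mv_vsc)
    finally have e1: "mv n x (ev j) = mv n k (ev j + vsc (vsc (vv n) (of_real N)) (cc j))" .
    have iv: "is_vec n (ev j + vsc (vsc (vv n) (of_real N)) (cc j))"
      using j isv by (simp add: is_vec_def ev_apply vsc_apply)
    have "mv n m (ev j) = mv n (expH n (- s)) (ev j + vsc (vsc (vv n) (of_real N)) (cc j))"
      by (simp add: m_def mv_mmul e1 cancel[OF iv])
    also have "\<dots> = ev j + vsc (vv n) (cc j)"
      using n j EvvN by (simp add: mv_add mv_vsc mv_expH_ev)
    finally show ?thesis .
  qed
  have ment: "m i j = mv n m (ev j) i" if "i \<le> n" "j \<le> n" for i j
    using that mm by (simp add: mv_ev col_def)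
  have P1e: "m i 0 + m i n = vv n i" if "i \<le> n" for i
    using that n P1 mv_vv[OF n that, of m] by simp
  have P2e: "m i j = ev j i + vv n i * cc j" if "i \<le> n" "0 < j" "j < n" for i j
    using that P2[of j] ment[of i j] by (simp add: vsc_apply)
  have P3: "m 0 0 - m 0 n - (m n 0 - m n n) = 2"
  proof -
    define v' where "v' = ev 0 - ev n"
    have "jip n (mv n m v') (mv n m (vv n)) = jip n v' (vv n)" by (rule jip_mv[OF mS])
    then have "qcnj (mv n m v' 0) - qcnj (mv n m v' n) = qcnj (v' 0) - qcnj (v' n)"
      using n by (simp add: P1 jip_vv_right)
    moreover have "mv n m v' i = m i 0 - m i n" if "i \<le> n" for i
      using that n mm by (simp add: v'_def mv_diff mv_ev col_def)
    ultimately have "qcnj (m 0 0 - m 0 n) - qcnj (m n 0 - m n n) = 2"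
      using n by (simp add: v'_def ev_apply qcnj_minus)
    then have "qcnj (m 0 0 - m 0 n - (m n 0 - m n n)) = qcnj 2" by (simp add: qcnj_diff)
    then show ?thesis by (metis qcnj_qcnj)
  qed
  have a0: "m 0 0 + m 0 n = 1" and an: "m n 0 + m n n = 1"
    using P1e[of 0] P1e[of n] n by (simp_all add: vv_apply)
  have h1: "m 0 n = 1 - m 0 0" using a0 by (simp add: algebra_simps)
  have h2: "m n 0 = m 0 0 - 1" using a0 an P3 by (simp add: quat_eq_iff)
  have h3: "m n n = 2 - m 0 0" using a0 an P3 by (simp add: quat_eq_iff)
  have h4: "m i n = - m i 0" if "0 < i" "i < n" for i
    using P1e[of i] that by (simp add: vv_apply algebra_simps eq_neg_iff_add_eq_0)
  have h5: "m n j = m 0 j" if "0 < j" "j < n" for j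
    using P2e[of n j] P2e[of 0 j] that n by (simp add: vv_apply ev_apply)
  have h6: "m i j = (if i = j then 1 else 0)" if "0 < i" "i < n" "0 < j" "j < n" for i j
    using P2e[of i j] that by (simp add: vv_apply ev_apply)
  have mN: "m \<in> Ngrp n" by (rule N_crit[OF n mS h1 h2 h3 h4 h5 h6])
  show ?thesis using kK mN xeq by blast
qed




lemma final_real:
  fixes t T s P Q A Dg Bg :: real
  assumes t: "0 \<le> t" and T: "0 \<le> T" and P: "0 < P" and Q: "0 \<le> Q"
    and up: "2 * A \<le> exp t * P + exp (- t) * Q"
    and low: "exp t * P + exp (- t) / P \<le> 2 * A"
    and cT: "cosh T = A" and s: "exp s = P * exp t"
    and Qb: "Q \<le> Dg + Bg" and Pb: "Dg - Bg \<le> P" and DB: "0 < Dg - Bg"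
  shows "0 \<le> T - s \<and> T - s \<le> (Dg + Bg) / (Dg - Bg) * exp (- 2 * t)"
proof -
  have sT0: "0 \<le> sinh T" using T by simp
  have sT2: "(sinh T)^2 = A^2 - 1" using cosh_square_eq[of T] cT by simp
  have eT: "exp T = A + sinh T" using cosh_plus_sinh[of T] cT by simp
  have sleA: "sinh T \<le> A"
  proof -
    have "(sinh T)^2 \<le> A^2" using sT2 by simp
    moreover have "0 \<le> A" using cT[symmetric] by simp
    ultimately show ?thesis by (rule power2_le_imp_le)
  qed
  define y where "y = exp t * P"
  have yp: "0 < y" using P by (simp add: y_def)
  have es: "exp s = y" using s by (simp add: y_def mult.commute)
    have lowT: "y \<le> exp T"
  proof (cases "y \<le> A")
    case True then show ?thesis using eT sT0 by linarith
  next
    case False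
    have ey: "exp (- t) / P = 1 / y" by (simp add: y_def exp_minus field_simps)
    have "y + 1 / y \<le> 2 * A" using low ey by (simp add: y_def)
    then have "y * y + 1 \<le> 2 * A * y" using yp by (simp add: field_simps)
    then have "(y - A)^2 \<le> (sinh T)^2" using sT2 by (simp add: power2_eq_square algebra_simps)
    then have "y - A \<le> sinh T" using sT0 by (rule power2_le_imp_le)
    then show ?thesis using eT by simp
  qed
  have s_le: "s \<le> T" using lowT es by (metis exp_le_cancel_iff)
    define K where "K = (Dg + Bg) / (Dg - Bg) * exp (- 2 * t)"
  have QP: "Q / P \<le> (Dg + Bg) / (Dg - Bg)"
  proof -
    have "Q / P \<le> (Dg + Bg) / P" using Qb P by (simp add: divide_right_mono)
    also have "\<dots> \<le> (Dg + Bg) / (Dg - Bg)"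
      using Pb DB Q Qb by (intro divide_left_mono) auto
    finally show ?thesis .
  qed
  have "exp T \<le> 2 * A" using eT sleA by simp
  also have "\<dots> \<le> y + exp (- t) * Q" using up by (simp add: y_def)
  finally have eTy: "exp T \<le> y + exp (- t) * Q" .
  have "exp (T - s) = exp T / y" using es by (simp add: exp_diff)
  also have "\<dots> \<le> (y + exp (- t) * Q) / y" using eTy yp by (simp add: divide_right_mono)
  also have "\<dots> = 1 + exp (- 2 * t) * (Q / P)"
    using yp P by (simp add: y_def field_simps exp_minus power2_eq_square) (simp add: exp_double[symmetric] mult_exp_exp)
  also have "\<dots> \<le> 1 + K"
  proof -
    have "exp (- 2 * t) * (Q / P) \<le> exp (- 2 * t) * ((Dg + Bg) / (Dg - Bg))"
      by (rule mult_left_mono[OF QP]) simp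
    then have "exp (- 2 * t) * (Q / P) \<le> K" unfolding K_def by (metis mult.commute)
    then show ?thesis by linarith
  qed
  also have "\<dots> \<le> exp K" by (rule exp_ge_add_one_self)
  finally have "T - s \<le> K" by simp
  then show ?thesis using s_le by (simp add: K_def)
qed


lemma normsq: "(norm p)^2 = qre p ^ 2 + qi p ^ 2 + qj p ^ 2 + qk p ^ 2"
  by (simp add: norm_quat_def qnorm_def)

lemma quat_bounds:
  fixes b d :: quat and t Dg Bg :: real
  assumes nd: "norm d = Dg" and nb: "norm b \<le> Bg" and DB: "Dg^2 = 1 + Bg^2" and B0: "0 \<le> Bg"
  shows "2 * norm (b * of_real (sinh t) + d * of_real (cosh t)) \<le> exp t * norm (b + d) + exp (- t) * norm (d - b)"
    and "exp t * norm (b + d) + exp (- t) / norm (b + d) \<le> 2 * norm (b * of_real (sinh t) + d * of_real (cosh t))"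
    and "norm (d - b) \<le> Dg + Bg" and "Dg - Bg \<le> norm (b + d)" and "0 < Dg - Bg"
proof -
  define X where "X = b + d"
  define Y where "Y = d - b"
  define P where "P = norm X"
  define Q where "Q = norm Y"
  have two: "2 * (b * of_real (sinh t) + d * of_real (cosh t)) = X * of_real (exp t) + Y * of_real (exp (- t))"
  proof -
    have sh: "sinh t = (exp t - exp (- t)) / 2" by (simp add: sinh_def)
    have ch: "cosh t = (exp t + exp (- t)) / 2" by (simp add: cosh_def)
    show ?thesis by (simp add: X_def Y_def quat_eq_iff) (simp add: sh ch algebra_simps add_divide_distrib diff_divide_distrib)
  qed
  have A2: "2 * norm (b * of_real (sinh t) + d * of_real (cosh t)) = norm (X * of_real (exp t) + Y * of_real (exp (- t)))"
  proof -
    have "2 * norm (b * of_real (sinh t) + d * of_real (cosh t)) = norm (2 * (b * of_real (sinh t) + d * of_real (cosh t)))"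
      by (simp only: norm_mult norm_numeral)
    then show ?thesis by (simp only: two)
  qed
  show "2 * norm (b * of_real (sinh t) + d * of_real (cosh t)) \<le> exp t * norm (b + d) + exp (- t) * norm (d - b)"
    unfolding A2 X_def[symmetric] Y_def[symmetric]
    using norm_triangle_ineq[of "X * of_real (exp t)" "Y * of_real (exp (- t))"]
    by (simp add: norm_mult mult.commute)
  have Dg0: "0 \<le> Dg" using nd by auto
  have DgB: "Bg < Dg"
  proof -
    have "Bg^2 < Dg^2" using DB by simp
    then show ?thesis using Dg0 B0 by (simp add: power_less_imp_less_base)
  qed
  then show DBpos: "0 < Dg - Bg" by simp
  show "norm (d - b) \<le> Dg + Bg" using norm_triangle_ineq4[of d b] nd nb by simp
  have Pb: "Dg - Bg \<le> P" using norm_triangle_ineq2[of d "-b"] nd nb by (simp add: P_def X_def add.commute)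
  then show "Dg - Bg \<le> norm (b + d)" by (simp add: P_def X_def)
  have Pp: "0 < P" using Pb DBpos by simp
  have dot: "qre X * qre Y + qi X * qi Y + qj X * qj Y + qk X * qk Y = (norm d)^2 - (norm b)^2"
    by (simp only: normsq X_def Y_def) (simp add: power2_eq_square algebra_simps)
  have dot1: "1 \<le> (norm d)^2 - (norm b)^2"
  proof -
    have "(norm b)^2 \<le> Bg^2" using nb by (simp add: power_mono)
    then show ?thesis using nd DB by simp
  qed
  have csXY: "(norm d)^2 - (norm b)^2 \<le> P * Q"
  proof -
    have "((norm d)^2 - (norm b)^2)^2 \<le> P^2 * Q^2"
      using cs4[of "qre X" "qre Y" "qi X" "qi Y" "qj X" "qj Y" "qk X" "qk Y"] dot
      by (simp add: P_def Q_def normsq)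
    then have "((norm d)^2 - (norm b)^2)^2 \<le> (P * Q)^2" by (simp add: power_mult_distrib)
    then show ?thesis by (rule power2_le_imp_le) (simp add: P_def Q_def)
  qed
  have QP: "1 / P \<le> Q" using csXY dot1 Pp by (simp add: field_simps)
  have sq: "(norm (X * of_real (exp t) + Y * of_real (exp (- t))))^2 =
      (exp t)^2 * P^2 + (exp (- t))^2 * Q^2 + 2 * (exp t * exp (- t)) * ((norm d)^2 - (norm b)^2)"
    by (simp only: normsq P_def Q_def X_def Y_def) (simp add: power2_eq_square algebra_simps)
  have "(exp t * P + exp (- t) / P)^2 = (exp t)^2 * P^2 + (exp (- t))^2 * (1 / P)^2 + 2"
    using Pp by (simp add: power2_eq_square field_simps exp_minus)
  also have "\<dots> \<le> (exp t)^2 * P^2 + (exp (- t))^2 * Q^2 + 2 * (exp t * exp (- t)) * ((norm d)^2 - (norm b)^2)"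
  proof -
    have "(1 / P)^2 \<le> Q^2" using QP Pp by (intro power_mono) auto
    then have h1: "(exp (- t))^2 * (1 / P)^2 \<le> (exp (- t))^2 * Q^2" by (rule mult_left_mono) simp
    have "exp t * exp (- t) = 1" by (simp add: exp_minus)
    then have h2: "2 \<le> 2 * (exp t * exp (- t)) * ((norm d)^2 - (norm b)^2)" using dot1 by simp
    show ?thesis using h1 h2 by linarith
  qed
  also have "\<dots> = (norm (X * of_real (exp t) + Y * of_real (exp (- t))))^2" by (simp only: sq)
  finally have "exp t * P + exp (- t) / P \<le> norm (X * of_real (exp t) + Y * of_real (exp (- t)))"
    by (rule power2_le_imp_le) simp
  then show "exp t * norm (b + d) + exp (- t) / norm (b + d) \<le> 2 * norm (b * of_real (sinh t) + d * of_real (cosh t))"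
    by (simp only: A2 P_def X_def)
qed




lemma amgm_sum:
  fixes a b :: "nat \<Rightarrow> real"
  assumes a: "\<And>l. 0 \<le> a l" and b: "\<And>l. 0 \<le> b l" and b1: "(\<Sum>l\<in>A. (b l)^2) = 1" and fin: "finite A"
  shows "(\<Sum>l\<in>A. a l * b l) \<le> sqrt (\<Sum>l\<in>A. (a l)^2)"
proof (cases "(\<Sum>l\<in>A. (a l)^2) = 0")
  case True
  then have "\<forall>l\<in>A. (a l)^2 = 0" using fin by (subst sum_nonneg_eq_0_iff[symmetric]) auto
  then show ?thesis by simp
next
  case False
  define B where "B = sqrt (\<Sum>l\<in>A. (a l)^2)"
  have s0: "0 \<le> (\<Sum>l\<in>A. (a l)^2)" by (rule sum_nonneg) simp
  have Bp: "0 < B" using False s0 by (simp add: B_def)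
  have BB: "B^2 = (\<Sum>l\<in>A. (a l)^2)" using s0 by (simp add: B_def)
  have "(\<Sum>l\<in>A. a l * b l) \<le> (\<Sum>l\<in>A. ((a l)^2 / B + B * (b l)^2) / 2)"
  proof (rule sum_mono)
    fix l
    have "0 \<le> (a l - B * b l)^2" by simp
    then have "2 * (a l * b l) * B \<le> (a l)^2 + B^2 * (b l)^2" by (simp add: power2_eq_square algebra_simps)
    then show "a l * b l \<le> ((a l)^2 / B + B * (b l)^2) / 2" using Bp by (simp add: field_simps power2_eq_square)
  qed
  also have "\<dots> = ((\<Sum>l\<in>A. (a l)^2) / B + B * (\<Sum>l\<in>A. (b l)^2)) / 2"
    by (simp add: sum_divide_distrib[symmetric] sum.distrib sum_distrib_left add_divide_distrib)
  also have "\<dots> = B" using Bp by (simp only: b1 BB[symmetric]) (simp add: power2_eq_square field_simps)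
  finally show ?thesis by (simp add: B_def)
qed

theorem mainTheorem14:
  fixes n :: nat and g k :: qmat and t :: real
  assumes "1 \<le> n"
    and "g \<in> Sp n" and "k \<in> Kgrp n" and "0 \<le> t"
  shows "let x = mmul n (mmul n (minv n g) k) (expH n t);
             r = vnorm n (act n g (\<lambda>_. 0))
         in 0 \<le> cartan n x - iwasawa n x \<and>
            cartan n x - iwasawa n x \<le> (1 + r) / (1 - r) * exp (- 2 * t)"
proof -
  have n: "0 < n" using assms(1) by simp
  have g: "g \<in> Sp n" and kK: "k \<in> Kgrp n" and t: "0 \<le> t" using assms by simp_all
  have kS: "k \<in> Sp n" using kK by (rule K_Sp)
  define G where "G = ginv n g"
  have mg: "minv n g = G" using minv_Sp[OF g] by (simp add: G_def)
  define x where "x = mmul n (mmul n G k) (expH n t)"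
  have xS: "x \<in> Sp n" unfolding x_def G_def by (intro Sp_mmul ginv_Sp expH_Sp g kS n)
  obtain T k1 k2 where T0: "0 \<le> T" and k1: "k1 \<in> Kgrp n" and k2: "k2 \<in> Kgrp n"
    and xT: "x = mmul n (mmul n k1 (expH n T)) k2"
    using cartan_exists[OF n xS] by blast
  have cx: "cartan n x = T" by (rule cartan_eq[OF n T0 k1 k2 xT])
  have cT: "cosh T = norm (x n n)" using cartan_norm[OF n k1 k2, of T] xT by simp
  obtain kap s m where kap: "kap \<in> Kgrp n" and mN: "m \<in> Ngrp n" and xs: "x = mmul n (mmul n kap (expH n s)) m"
    using iw_exists[OF n xS] by blast
  have ix: "iwasawa n x = s" by (rule iwasawa_eq[OF n kap mN xs])
  have es: "exp s = norm (mv n x (vv n) n)"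
    using iw_val[OF n kap mN, of s] xs by (simp add: norm_mult K_norm[OF kap])
  define be where "be = - (\<Sum>l<n. qcnj (g l n) * k l 0)"
  define de where "de = qcnj (g n n) * k n n"
  have Gnl: "G n l = - (qcnj (g l n) * jdiag n l)" if "l \<le> n" for l
    using that by (simp add: G_def ginv_def mmul_J_left mmul_J_right madj_def jdiag_def)
  have Gk0: "mmul n G k n 0 = be"
  proof -
    have "mmul n G k n 0 = (\<Sum>l<n. G n l * k l 0) + G n n * k n 0" by (simp add: mmul_def sum_atMost_split[of _ n])
    also have "k n 0 = 0" using K_entries[OF kK n] by simp
    also have "(\<Sum>l<n. G n l * k l 0) = be" unfolding be_def
      by (simp add: Gnl jdiag_def sum_negf[symmetric])
    finally show ?thesis by simp
  qed
  have Gkn: "mmul n G k n n = de"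
  proof -
    have "mmul n G k n n = (\<Sum>l<n. G n l * k l n) + G n n * k n n" by (simp add: mmul_def sum_atMost_split[of _ n])
    also have "(\<Sum>l<n. G n l * k l n) = 0" using K_entries[OF kK] by simp
    also have "G n n = qcnj (g n n)" by (simp add: Gnl jdiag_def)
    finally show ?thesis by (simp add: de_def)
  qed
  have xnn: "x n n = be * of_real (sinh t) + de * of_real (cosh t)"
    using n by (simp add: x_def mmul_expH_right Gk0 Gkn)
  have xv: "mv n x (vv n) n = (be + de) * of_real (exp t)"
  proof -
    have "mv n x (vv n) n = x n 0 + x n n" using n by (simp add: mv_vv)
    also have "\<dots> = (be + de) * of_real (cosh t + sinh t)"
      using n by (simp add: x_def mmul_expH_right Gk0 Gkn algebra_simps)
    finally show ?thesis by (simp add: cosh_plus_sinh)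
  qed
  define Dg where "Dg = norm (g n n)"
  define Bg where "Bg = sqrt (\<Sum>l<n. (norm (g l n))^2)"
  have s0: "0 \<le> (\<Sum>l<n. (norm (g l n))^2)" by (rule sum_nonneg) simp
  have B0: "0 \<le> Bg" using s0 by (simp add: Bg_def)
  have BB: "Bg^2 = (\<Sum>l<n. (norm (g l n))^2)" using s0 by (simp add: Bg_def)
  have DB: "Dg^2 = 1 + Bg^2"
  proof -
    have "jip n (col g n) (col g n) = -1" using Sp_cols_eq[OF g, of n n] by (simp add: Jform_def)
    then have "of_real ((\<Sum>l<n. (norm (g l n))^2) - (norm (g n n))^2) = (of_real (-1) :: quat)"
      by (simp add: jip_self col_def)
    then have "(\<Sum>l<n. (norm (g l n))^2) - (norm (g n n))^2 = -1" using of_real_eq_iff by blast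
    then show ?thesis by (simp add: Dg_def BB)
  qed
  have nde: "norm de = Dg" by (simp add: de_def norm_mult K_norm[OF kK] Dg_def)
  have k01: "(\<Sum>l<n. (norm (k l 0))^2) = 1"
  proof -
    have "jip n (col k 0) (col k 0) = 1" using Sp_cols_eq[OF kS, of 0 0] n by (simp add: Jform_def)
    moreover have "k n 0 = 0" using K_entries[OF kK n] by simp
    ultimately have "of_real ((\<Sum>l<n. (norm (k l 0))^2) - 0) = (of_real 1 :: quat)"
      by (simp add: jip_self col_def)
    then show ?thesis using of_real_eq_iff by fastforce
  qed
  have nbe: "norm be \<le> Bg"
  proof -
    have "norm be \<le> (\<Sum>l<n. norm (qcnj (g l n) * k l 0))" unfolding be_def norm_minus_cancel by (rule norm_sum)
    also have "\<dots> = (\<Sum>l<n. norm (g l n) * norm (k l 0))" by (simp add: norm_mult)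
    also have "\<dots> \<le> Bg" unfolding Bg_def by (rule amgm_sum) (simp_all add: k01)
    finally show ?thesis .
  qed
  have Dgp: "0 < Dg"
  proof -
    have "0 \<le> Dg" by (simp add: Dg_def)
    moreover have "1 \<le> Dg^2" using DB zero_le_power2[of Bg] by linarith
    then have "Dg \<noteq> 0" by auto
    ultimately show ?thesis by simp
  qed
  have gnn0: "g n n \<noteq> 0" using Dgp by (auto simp: Dg_def)
  have rv: "vnorm n (act n g (\<lambda>_. 0)) = Bg / Dg"
  proof -
    have "vnorm n (act n g (\<lambda>_. 0)) = sqrt (\<Sum>i<n. (norm (g i n))^2 / Dg^2)"
      unfolding vnorm_def act_def qnorm_norm
      by (intro arg_cong[where f=sqrt] sum.cong) (simp_all add: norm_mult norm_inverse Dg_def power_divide divide_inverse power_mult_distrib power_inverse)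
    also have "\<dots> = sqrt (Bg^2 / Dg^2)" by (simp add: BB sum_divide_distrib)
    also have "\<dots> = Bg / Dg" using B0 Dgp by (simp add: real_sqrt_divide)
    finally show ?thesis .
  qed
  note qb = quat_bounds(1)[OF nde nbe DB B0, of t] quat_bounds(2)[OF nde nbe DB B0, of t]
    quat_bounds(3)[OF nde nbe DB B0] quat_bounds(4)[OF nde nbe DB B0] quat_bounds(5)[OF nde nbe DB B0]
  have rr: "(1 + Bg / Dg) / (1 - Bg / Dg) = (Dg + Bg) / (Dg - Bg)"
  proof -
    have "(1 + Bg / Dg) / (1 - Bg / Dg) = ((Dg + Bg) / Dg) / ((Dg - Bg) / Dg)"
      using Dgp by (simp add: field_simps)
    also have "\<dots> = (Dg + Bg) / (Dg - Bg)" using Dgp by simp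
    finally show ?thesis .
  qed
  have res: "0 \<le> T - s \<and> T - s \<le> (Dg + Bg) / (Dg - Bg) * exp (- 2 * t)"
  proof (rule final_real[OF t T0 _ _ qb(1) qb(2)])
    show "0 < norm (be + de)" using qb(4) qb(5) by linarith
    show "0 \<le> norm (de - be)" by simp
    show "cosh T = norm (be * of_real (sinh t) + de * of_real (cosh t))" using cT xnn by simp
    show "exp s = norm (be + de) * exp t" using es xv by (simp add: norm_mult)
  qed (use qb in auto)
  show ?thesis
    unfolding Let_def mg x_def[symmetric] cx ix rv rr using res by simp
qed


end
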